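(* Let $(M,\varphi,\xi,\eta,g,\varepsilon)$ be a $3$-dimensional $(\varepsilon)$-para Sasakian manifold with scalar curvature $r$, and let $\mathcal{T}$ be its $\mathcal{T}$-curvature tensor with constants $a_0,\dots,a_7$. Then for all vector fields $X,Y,Z$, \begin{align*} \mathcal{T}(X,Y)Z &=\left( \left( \tfrac{r}{2}+\varepsilon \right) \left(a_{0}+a_{1}+a_{4}\right) +a_{7}r+\varepsilon a_{0}\right) g(Y,Z)X -\left( \left( \tfrac{r}{2}+\varepsilon \right) \left(a_{0}-a_{2}-a_{5}\right) +a_{7}r+\varepsilon a_{0}\right) g(X,Z)Y \\ &\quad +\left( \tfrac{r}{2}+\varepsilon \right) \left( a_{3}+a_{6}\right)g(X,Y)Z-\left( \tfrac{\varepsilon r}{2}+3\right) a_{3}\eta (X)\eta (Y)Z -\left( \tfrac{\varepsilon r}{2}+3\right) \left( a_{0}+a_{1}\right) \eta(Y)\eta (Z)X\\ &\quad +\left( \tfrac{\varepsilon r}{2}+3\right) \left(a_{0}-a_{2}\right) \eta (X)\eta (Z)Y +\left( \tfrac{r}{2}+3\varepsilon \right) \left( a_{0}-a_{5}\right)g(X,Z)\eta (Y)\xi -\left( \tfrac{r}{2}+3\varepsilon \right) a_{6}g(X,Y)\eta(Z)\xi \\ &\quad -\left( \tfrac{r}{2}+3\varepsilon \right) \left( a_{0}+a_{4}\right)g(Y,Z)\eta (X)\xi . \end{align*}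
   Context: An $(\varepsilon)$-almost paracontact metric manifold is a manifold $M$ with a $(1,1)$-tensor field $\varphi$, a vector field $\xi$, a $1$-form $\eta$ and a semi-Riemannian metric $g$ such that $\varphi^2=I-\eta\otimes\xi$, $\eta(\xi)=1$, $\varphi\xi=0$, $\eta\circ\varphi=0$, and $g(\varphi X,\varphi Y)=g(X,Y)-\varepsilon\eta(X)\eta(Y)$ for all $X,Y$, where $\varepsilon=\pm1$ (equivalently $g(X,\varphi Y)=g(\varphi X,Y)$ and $g(X,\xi)=\varepsilon\eta(X)$). It is an $(\varepsilon)$-para Sasakian manifold if $(\nabla_X\varphi)Y=-g(\varphi X,\varphi Y)\xi-\varepsilon\eta(Y)\varphi^2X$ for all $X,Y$, where $\nabla$ is the Levi-Civita connection of $g$. For a semi-Riemannian manifold with curvature tensor $R$, Ricci tensor $S$, Ricci operator $Q$ and scalar curvature $r$, the $\mathcal{T}$-curvature tensor with constants $a_0,\dots,a_7$ is $\mathcal{T}(X,Y)Z=a_0R(X,Y)Z+a_1S(Y,Z)X+a_2S(X,Z)Y+a_3S(X,Y)Z+a_4g(Y,Z)QX+a_5g(X,Z)QY+a_6g(X,Y)QZ+a_7r(g(Y,Z)X-g(X,Z)Y)$. *)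

theory Defs
  imports "HOL-Analysis.Analysis"
begin

text \<open>Local (coordinate) model of a 3-dimensional semi-Riemannian manifold:
  an open set U of real^3.  Vector fields are maps real^3 => real^3,
  (1,1)-tensors are matrix-valued maps, 1-forms are covector-valued maps
  (eta(X) = eta x \<bullet> X x), the metric is a matrix-valued map.\<close>

type_synonym vf = "real^3 \<Rightarrow> real^3"

definition pd :: "3 \<Rightarrow> (real^3 \<Rightarrow> 'b::real_normed_vector) \<Rightarrow> real^3 \<Rightarrow> 'b" where
  "pd i f x = frechet_derivative f (at x) (axis i 1)"

fun iter_pd :: "3 list \<Rightarrow> (real^3 \<Rightarrow> 'b::real_normed_vector) \<Rightarrow> real^3 \<Rightarrow> 'b" where
  "iter_pd [] f = f"
| "iter_pd (i # is) f = pd i (iter_pd is f)"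

definition smooth3_on :: "(real^3) set \<Rightarrow> (real^3 \<Rightarrow> 'b::real_normed_vector) \<Rightarrow> bool" where
  "smooth3_on U f \<longleftrightarrow> (\<forall>is. \<forall>x\<in>U. iter_pd is f differentiable (at x))"

definition ginner :: "(real^3 \<Rightarrow> real^3^3) \<Rightarrow> vf \<Rightarrow> vf \<Rightarrow> real^3 \<Rightarrow> real" where
  "ginner gm X Y x = X x \<bullet> (gm x *v Y x)"

definition christoffel :: "(real^3 \<Rightarrow> real^3^3) \<Rightarrow> real^3 \<Rightarrow> 3 \<Rightarrow> 3 \<Rightarrow> 3 \<Rightarrow> real" where
  "christoffel gm x k i j =
     (1/2) * (\<Sum>l\<in>UNIV. matrix_inv (gm x) $ k $ l *
        (pd i (\<lambda>y. gm y $ j $ l) x + pd j (\<lambda>y. gm y $ i $ l) x - pd l (\<lambda>y. gm y $ i $ j) x))"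

definition nabla :: "(real^3 \<Rightarrow> real^3^3) \<Rightarrow> vf \<Rightarrow> vf \<Rightarrow> vf" where
  "nabla gm X Y x = frechet_derivative Y (at x) (X x)
     + (\<chi> k. \<Sum>i\<in>UNIV. \<Sum>j\<in>UNIV. christoffel gm x k i j * X x $ i * Y x $ j)"

definition lie :: "vf \<Rightarrow> vf \<Rightarrow> vf" where
  "lie X Y x = frechet_derivative Y (at x) (X x) - frechet_derivative X (at x) (Y x)"

definition curv :: "(real^3 \<Rightarrow> real^3^3) \<Rightarrow> vf \<Rightarrow> vf \<Rightarrow> vf \<Rightarrow> vf" where
  "curv gm X Y Z x = nabla gm X (nabla gm Y Z) x - nabla gm Y (nabla gm X Z) x - nabla gm (lie X Y) Z x"

definition cf :: "real^3 \<Rightarrow> vf" where "cf v = (\<lambda>_. v)"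

definition ricci :: "(real^3 \<Rightarrow> real^3^3) \<Rightarrow> vf \<Rightarrow> vf \<Rightarrow> real^3 \<Rightarrow> real" where
  "ricci gm Y Z x = (\<Sum>i\<in>UNIV. curv gm (cf (axis i 1)) Y Z x $ i)"

definition ricci_mat :: "(real^3 \<Rightarrow> real^3^3) \<Rightarrow> real^3 \<Rightarrow> real^3^3" where
  "ricci_mat gm x = (\<chi> i j. ricci gm (cf (axis i 1)) (cf (axis j 1)) x)"

definition ricci_op :: "(real^3 \<Rightarrow> real^3^3) \<Rightarrow> vf \<Rightarrow> vf" where
  "ricci_op gm X x = (matrix_inv (gm x) ** ricci_mat gm x) *v X x"

definition scal :: "(real^3 \<Rightarrow> real^3^3) \<Rightarrow> real^3 \<Rightarrow> real" where
  "scal gm x = trace (matrix_inv (gm x) ** ricci_mat gm x)"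

definition Tcurv :: "(real^3 \<Rightarrow> real^3^3) \<Rightarrow> (nat \<Rightarrow> real) \<Rightarrow> vf \<Rightarrow> vf \<Rightarrow> vf \<Rightarrow> vf" where
  "Tcurv gm a X Y Z x =
      a 0 *\<^sub>R curv gm X Y Z x
    + (a 1 * ricci gm Y Z x) *\<^sub>R X x
    + (a 2 * ricci gm X Z x) *\<^sub>R Y x
    + (a 3 * ricci gm X Y x) *\<^sub>R Z x
    + (a 4 * ginner gm Y Z x) *\<^sub>R ricci_op gm X x
    + (a 5 * ginner gm X Z x) *\<^sub>R ricci_op gm Y x
    + (a 6 * ginner gm X Y x) *\<^sub>R ricci_op gm Z x
    + (a 7 * scal gm x) *\<^sub>R ((ginner gm Y Z x) *\<^sub>R X x - (ginner gm X Z x) *\<^sub>R Y x)"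

definition smooth_vf :: "(real^3) set \<Rightarrow> vf \<Rightarrow> bool" where
  "smooth_vf U X \<longleftrightarrow> smooth3_on U X"

definition eps_almost_paracontact ::
  "(real^3) set \<Rightarrow> (real^3 \<Rightarrow> real^3^3) \<Rightarrow> vf \<Rightarrow> (real^3 \<Rightarrow> real^3) \<Rightarrow> (real^3 \<Rightarrow> real^3^3) \<Rightarrow> real \<Rightarrow> bool" where
  "eps_almost_paracontact U \<phi> \<xi> \<eta> gm \<epsilon> \<longleftrightarrow>
     open U \<and> (\<epsilon> = 1 \<or> \<epsilon> = -1) \<and>
     smooth3_on U \<phi> \<and> smooth3_on U \<xi> \<and> smooth3_on U \<eta> \<and> smooth3_on U gm \<and>
     (\<forall>x\<in>U.
        transpose (gm x) = gm x \<and> det (gm x) \<noteq> 0 \<and>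
        (\<forall>v. \<phi> x *v (\<phi> x *v v) = v - (\<eta> x \<bullet> v) *\<^sub>R \<xi> x) \<and>
        \<eta> x \<bullet> \<xi> x = 1 \<and>
        \<phi> x *v \<xi> x = 0 \<and>
        (\<forall>v. \<eta> x \<bullet> (\<phi> x *v v) = 0) \<and>
        (\<forall>v w. (\<phi> x *v v) \<bullet> (gm x *v (\<phi> x *v w)) = v \<bullet> (gm x *v w) - \<epsilon> * (\<eta> x \<bullet> v) * (\<eta> x \<bullet> w)))"

definition eps_para_sasakian ::
  "(real^3) set \<Rightarrow> (real^3 \<Rightarrow> real^3^3) \<Rightarrow> vf \<Rightarrow> (real^3 \<Rightarrow> real^3) \<Rightarrow> (real^3 \<Rightarrow> real^3^3) \<Rightarrow> real \<Rightarrow> bool" where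
  "eps_para_sasakian U \<phi> \<xi> \<eta> gm \<epsilon> \<longleftrightarrow>
     eps_almost_paracontact U \<phi> \<xi> \<eta> gm \<epsilon> \<and>
     (\<forall>X Y. smooth_vf U X \<longrightarrow> smooth_vf U Y \<longrightarrow> (\<forall>x\<in>U.
        nabla gm X (\<lambda>y. \<phi> y *v Y y) x - \<phi> x *v nabla gm X Y x
        = - (ginner gm (\<lambda>y. \<phi> y *v X y) (\<lambda>y. \<phi> y *v Y y) x) *\<^sub>R \<xi> x
          - (\<epsilon> * (\<eta> x \<bullet> Y x)) *\<^sub>R (\<phi> x *v (\<phi> x *v X x))))"

end

theory Submission
  imports Defs
begin

lemma vec3_expand: "(v::real^'n) = (\<Sum>i\<in>UNIV. v$i *\<^sub>R axis i 1)"
  by (simp add: vec_eq_iff sum_component axis_def if_distrib cong: if_cong)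

lemma fd_works: "f differentiable at x \<Longrightarrow> (f has_derivative frechet_derivative f (at x)) (at x)"
  using frechet_derivative_works by blast

lemma pd_hd: "(f has_derivative f') (at x) \<Longrightarrow> pd i f x = f' (axis i 1)"
  unfolding pd_def by (metis frechet_derivative_at)

lemma fd_expand:
  fixes f :: "real^3 \<Rightarrow> 'b::real_normed_vector"
  assumes "f differentiable at x"
  shows "frechet_derivative f (at x) v = (\<Sum>i\<in>UNIV. v$i *\<^sub>R pd i f x)"
proof -
  have l: "linear (frechet_derivative f (at x))"
    using fd_works[OF assms] has_derivative_linear by blast
  have "frechet_derivative f (at x) v = frechet_derivative f (at x) (\<Sum>i\<in>UNIV. v$i *\<^sub>R axis i 1)"
    using vec3_expand[of v] by simp
  also have "\<dots> = (\<Sum>i\<in>UNIV. v$i *\<^sub>R frechet_derivative f (at x) (axis i 1))"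
    by (simp add: linear_sum[OF l] linear_scale[OF l])
  finally show ?thesis by (simp add: pd_def)
qed


lemma pd_add: "f differentiable at x \<Longrightarrow> g differentiable at x \<Longrightarrow>
   pd i (\<lambda>y. f y + g y) x = pd i f x + pd i g x"
  using pd_hd[OF has_derivative_add[OF fd_works fd_works]] by (simp add: pd_def)

lemma pd_diff: "f differentiable at x \<Longrightarrow> g differentiable at x \<Longrightarrow>
   pd i (\<lambda>y. f y - g y) x = pd i f x - pd i g x"
  using pd_hd[OF has_derivative_diff[OF fd_works fd_works]] by (simp add: pd_def)

lemma pd_mult:
  fixes f g :: "real^3 \<Rightarrow> real"
  shows "f differentiable at x \<Longrightarrow> g differentiable at x \<Longrightarrow>
   pd i (\<lambda>y. f y * g y) x = pd i f x * g x + f x * pd i g x"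
  using pd_hd[OF has_derivative_mult[OF fd_works fd_works]] by (simp add: pd_def add.commute)

lemma pd_scaleR:
  fixes f :: "real^3 \<Rightarrow> real"
  shows "f differentiable at x \<Longrightarrow> g differentiable at x \<Longrightarrow>
   pd i (\<lambda>y. f y *\<^sub>R g y) x = pd i f x *\<^sub>R g x + f x *\<^sub>R pd i g x"
  using pd_hd[OF has_derivative_scaleR[OF fd_works fd_works]] by (simp add: pd_def add.commute)

lemma pd_sum:
  assumes "finite S" "\<And>j. j \<in> S \<Longrightarrow> f j differentiable at x"
  shows "pd i (\<lambda>y. \<Sum>j\<in>S. f j y) x = (\<Sum>j\<in>S. pd i (f j) x)"
proof -
  have "((\<lambda>y. \<Sum>j\<in>S. f j y) has_derivative (\<lambda>h. \<Sum>j\<in>S. frechet_derivative (f j) (at x) h)) (at x)"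
    by (rule has_derivative_sum) (use assms fd_works in auto)
  from pd_hd[OF this] show ?thesis by (simp add: pd_def)
qed

lemma pd_const: "pd i (\<lambda>y. c) x = 0"
  by (simp add: pd_def)

lemma pd_cmult:
  fixes f :: "real^3 \<Rightarrow> 'b::real_normed_vector"
  shows "f differentiable at x \<Longrightarrow> pd i (\<lambda>y. c *\<^sub>R f y) x = c *\<^sub>R pd i f x"
  using pd_hd[OF has_derivative_scaleR_right[OF fd_works]] by (simp add: pd_def)

lemma pd_nth:
  fixes f :: "real^3 \<Rightarrow> ('a::real_normed_vector)^'n"
  shows "f differentiable at x \<Longrightarrow> pd i (\<lambda>y. f y $ k) x = pd i f x $ k"
  using pd_hd[OF bounded_linear.has_derivative[OF bounded_linear_vec_nth fd_works]] by (simp add: pd_def)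

lemma diff_nth:
  fixes f :: "real^3 \<Rightarrow> ('a::real_normed_vector)^'n"
  shows "f differentiable at x \<Longrightarrow> (\<lambda>y. f y $ k) differentiable at x"
  by (rule differentiableI, rule bounded_linear.has_derivative[OF bounded_linear_vec_nth fd_works])

lemma diff_vec:
  fixes f :: "real^3 \<Rightarrow> real^'n"
  assumes "\<And>k. (\<lambda>y. f y $ k) differentiable at x"
  shows "f differentiable at x"
proof -
  have e: "f = (\<lambda>y. \<Sum>k\<in>UNIV. (f y $ k) *\<^sub>R axis k 1)"
    using vec3_expand by auto
  show ?thesis
    by (subst e) (intro differentiable_sum ballI differentiable_scaleR assms differentiable_const, simp)
qed

lemma pd_transform:
  assumes "f differentiable at x" "open U" "x \<in> U" "\<And>y. y \<in> U \<Longrightarrow> f y = g y"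
  shows "pd i f x = pd i g x" "g differentiable at x"
proof -
  show "pd i f x = pd i g x" unfolding pd_def
    using frechet_derivative_transform_within_open[OF assms] by simp
  show "g differentiable at x"
    using assms has_derivative_transform_within_open fd_works unfolding differentiable_def by blast
qed

lemma fd_transform:
  assumes "f differentiable at x" "open U" "x \<in> U" "\<And>y. y \<in> U \<Longrightarrow> f y = g y"
  shows "frechet_derivative f (at x) = frechet_derivative g (at x)"
  using frechet_derivative_transform_within_open[OF assms] .

lemma line_deriv:
  fixes f :: "real^3 \<Rightarrow> real"
  assumes "f differentiable at (a + s *\<^sub>R v)"
  shows "((\<lambda>\<sigma>. f (a + \<sigma> *\<^sub>R v)) has_derivative (\<lambda>h. h * frechet_derivative f (at (a + s *\<^sub>R v)) v)) (at s)"
proof -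
  have l: "linear (frechet_derivative f (at (a + s *\<^sub>R v)))"
    using fd_works[OF assms] has_derivative_linear by blast
  have d1: "((\<lambda>\<sigma>. a + \<sigma> *\<^sub>R v) has_derivative (\<lambda>h. h *\<^sub>R v)) (at s)"
    by (auto intro!: derivative_eq_intros)
  have "((\<lambda>\<sigma>. f (a + \<sigma> *\<^sub>R v)) has_derivative (\<lambda>h. frechet_derivative f (at (a + s *\<^sub>R v)) (h *\<^sub>R v))) (at s)"
    using has_derivative_compose[OF d1 fd_works[OF assms]] by simp
  then show ?thesis by (simp add: linear_scale[OF l])
qed

lemma mvt_step:
  fixes f :: "real^3 \<Rightarrow> real"
  assumes U: "open U" "x \<in> U" and fd: "\<forall>y\<in>U. f differentiable at y"
    and pdi: "pd i f differentiable at x" and e: "e > 0" and nw: "norm w = 1"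
  shows "\<exists>d>0. \<forall>t. 0 < t \<and> t < d \<longrightarrow>
     \<bar>f ((x + t *\<^sub>R w) + t *\<^sub>R axis i 1) - f (x + t *\<^sub>R axis i 1) - f (x + t *\<^sub>R w) + f x
        - t * t * frechet_derivative (pd i f) (at x) w\<bar> \<le> 3 * e * t * t"
proof -
  obtain r where r: "r > 0" "ball x r \<subseteq> U" using U openE by blast
  define L where "L = frechet_derivative (pd i f) (at x)"
  have hL: "(pd i f has_derivative L) (at x)" unfolding L_def by (rule fd_works[OF pdi])
  have lin: "linear L" using hL has_derivative_linear by blast
  obtain d1 where d1: "d1 > 0" "\<forall>y. norm (y - x) < d1 \<longrightarrow> norm (pd i f y - pd i f x - L (y - x)) \<le> e * norm (y - x)"
    using hL e unfolding has_derivative_at_alt by blast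
  define ei where "ei = (axis i 1 :: real^3)"
  have nei: "norm ei = 1" by (simp add: ei_def)
  show ?thesis
  proof (intro exI[of _ "min (r/2) (d1/2)"] conjI allI impI)
    show "0 < min (r/2) (d1/2)" using r d1 by simp
    fix t assume t: "0 < t \<and> t < min (r / 2) (d1 / 2)"
    define g where "g s = f ((x + t *\<^sub>R w) + s *\<^sub>R ei) - f (x + s *\<^sub>R ei)" for s
    have inU1: "(x + t *\<^sub>R w) + s *\<^sub>R ei \<in> U" and inU2: "x + s *\<^sub>R ei \<in> U"
      and n1: "norm (((x + t *\<^sub>R w) + s *\<^sub>R ei) - x) \<le> 2 * t" and n2: "norm ((x + s *\<^sub>R ei) - x) \<le> t"
      if s: "0 \<le> s" "s \<le> t" for s
    proof -
      have "norm (t *\<^sub>R w + s *\<^sub>R ei) \<le> norm (t *\<^sub>R w) + norm (s *\<^sub>R ei)" by (rule norm_triangle_ineq)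
      also have "\<dots> = t + s" using nw nei s t by simp
      finally have a: "norm (t *\<^sub>R w + s *\<^sub>R ei) \<le> t + s" .
      show "norm (((x + t *\<^sub>R w) + s *\<^sub>R ei) - x) \<le> 2 * t" using a s by (simp add: algebra_simps)
      show "norm ((x + s *\<^sub>R ei) - x) \<le> t" using s nei by simp
      have "dist ((x + t *\<^sub>R w) + s *\<^sub>R ei) x < r" using a s t by (simp add: dist_norm algebra_simps)
      then show "(x + t *\<^sub>R w) + s *\<^sub>R ei \<in> U" using r by (auto simp: dist_commute)
      have "dist x (x + s *\<^sub>R ei) < r" using s t nei by (simp add: dist_norm)
      then show "x + s *\<^sub>R ei \<in> U" using r by auto
    qed
    define g' where "g' s = (\<lambda>h. h * (pd i f ((x + t *\<^sub>R w) + s *\<^sub>R ei) - pd i f (x + s *\<^sub>R ei)))" for s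
    have gd: "(g has_derivative g' s) (at s)" if s: "0 \<le> s" "s \<le> t" for s
    proof -
      have a: "((\<lambda>\<sigma>. f ((x + t *\<^sub>R w) + \<sigma> *\<^sub>R ei)) has_derivative (\<lambda>h. h * pd i f ((x + t *\<^sub>R w) + s *\<^sub>R ei))) (at s)"
        using line_deriv[of f "x + t *\<^sub>R w" s ei] fd inU1[OF s] by (simp add: pd_def ei_def)
      have b: "((\<lambda>\<sigma>. f (x + \<sigma> *\<^sub>R ei)) has_derivative (\<lambda>h. h * pd i f (x + s *\<^sub>R ei))) (at s)"
        using line_deriv[of f x s ei] fd inU2[OF s] by (simp add: pd_def ei_def)
      show ?thesis unfolding g_def g'_def using has_derivative_diff[OF a b] by (simp add: algebra_simps)
    qed
    have cont: "continuous_on {0..t} g"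
      by (rule continuous_at_imp_continuous_on) (metis atLeastAtMost_iff gd has_derivative_continuous)
    obtain \<sigma> where \<sigma>: "0 < \<sigma>" "\<sigma> < t" "g t - g 0 = g' \<sigma> (t - 0)"
      using mvt[of 0 t g g'] t cont gd by auto
    define P where "P = (x + t *\<^sub>R w) + \<sigma> *\<^sub>R ei"
    define Q where "Q = x + \<sigma> *\<^sub>R ei"
    have eP: "\<bar>pd i f P - pd i f x - L (P - x)\<bar> \<le> e * (2 * t)"
    proof -
      have "norm (P - x) \<le> 2 * t" unfolding P_def using n1[of \<sigma>] \<sigma> by simp
      moreover then have "norm (P - x) < d1" using t by simp
      ultimately show ?thesis using d1(2)[rule_format, of P] e
        by (smt (verit) mult_left_mono real_norm_def)
    qed
    have eQ: "\<bar>pd i f Q - pd i f x - L (Q - x)\<bar> \<le> e * t"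
    proof -
      have "norm (Q - x) \<le> t" unfolding Q_def using n2[of \<sigma>] \<sigma> by simp
      moreover then have "norm (Q - x) < d1" using t by simp
      ultimately show ?thesis using d1(2)[rule_format, of Q] e
        by (smt (verit) mult_left_mono real_norm_def)
    qed
    have LPQ: "L (P - x) - L (Q - x) = t * L w"
    proof -
      have e1: "P - x = t *\<^sub>R w + (Q - x)" unfolding P_def Q_def by (simp add: algebra_simps)
      have "L (t *\<^sub>R w + (Q - x)) = t * L w + L (Q - x)" using lin by (simp add: linear_add linear_scale)
      then show ?thesis by (subst e1) simp
    qed
    have "g t - g 0 = t * (pd i f P - pd i f Q)" using \<sigma>(3) by (simp add: g'_def P_def Q_def)
    moreover have "\<bar>(pd i f P - pd i f Q) - t * L w\<bar> \<le> 3 * e * t"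
      using eP eQ LPQ by (simp add: abs_le_iff)
    ultimately have "\<bar>(g t - g 0) - t * (t * L w)\<bar> \<le> t * (3 * e * t)"
      using t by (simp add: abs_mult right_diff_distrib[symmetric] mult_left_mono)
    then show "\<bar>f ((x + t *\<^sub>R w) + t *\<^sub>R axis i 1) - f (x + t *\<^sub>R axis i 1) - f (x + t *\<^sub>R w) + f x
        - t * t * frechet_derivative (pd i f) (at x) w\<bar> \<le> 3 * e * t * t"
      by (simp add: g_def ei_def L_def algebra_simps)
  qed
qed

lemma schwarz_real:
  fixes f :: "real^3 \<Rightarrow> real"
  assumes U: "open U" "x \<in> U" and fd: "\<forall>y\<in>U. f differentiable at y"
    and pdi: "pd i f differentiable at x" and pdj: "pd j f differentiable at x"
  shows "pd j (pd i f) x = pd i (pd j f) x"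
proof (rule ccontr)
  define a where "a = pd j (pd i f) x"
  define b where "b = pd i (pd j f) x"
  assume "pd j (pd i f) x \<noteq> pd i (pd j f) x"
  then have ab: "a \<noteq> b" by (simp add: a_def b_def)
  define e where "e = \<bar>a - b\<bar> / 12"
  have e: "e > 0" using ab by (simp add: e_def)
  obtain d1 where d1: "d1 > 0" "\<forall>t. 0 < t \<and> t < d1 \<longrightarrow>
     \<bar>f ((x + t *\<^sub>R axis j 1) + t *\<^sub>R axis i 1) - f (x + t *\<^sub>R axis i 1) - f (x + t *\<^sub>R axis j 1) + f x
        - t * t * a\<bar> \<le> 3 * e * t * t"
    using mvt_step[OF U fd pdi e, of "axis j 1"] by (auto simp: a_def pd_def)
  obtain d2 where d2: "d2 > 0" "\<forall>t. 0 < t \<and> t < d2 \<longrightarrow>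
     \<bar>f ((x + t *\<^sub>R axis i 1) + t *\<^sub>R axis j 1) - f (x + t *\<^sub>R axis j 1) - f (x + t *\<^sub>R axis i 1) + f x
        - t * t * b\<bar> \<le> 3 * e * t * t"
    using mvt_step[OF U fd pdj e, of "axis i 1"] by (auto simp: b_def pd_def)
  define t where "t = min d1 d2 / 2"
  have t: "0 < t" "t < d1" "t < d2" using d1 d2 by (auto simp: t_def)
  have sw: "(x + t *\<^sub>R axis i 1) + t *\<^sub>R axis j 1 = (x + t *\<^sub>R axis j 1) + t *\<^sub>R axis i 1"
    by (simp add: algebra_simps)
  have "\<bar>t * t * a - t * t * b\<bar> \<le> 6 * e * t * t"
    using d1(2)[rule_format, of t] d2(2)[rule_format, of t] t sw by (simp add: abs_le_iff)
  moreover have "\<bar>t * t * a - t * t * b\<bar> = t * t * \<bar>a - b\<bar>"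
    using t by (simp add: abs_mult right_diff_distrib[symmetric])
  ultimately have "t * t * \<bar>a - b\<bar> \<le> t * t * (6 * e)" by (simp add: algebra_simps)
  then have "\<bar>a - b\<bar> \<le> 6 * e" using t by (simp add: mult_le_cancel_left)
  then show False using e unfolding e_def by simp
qed

definition C1 :: "(real^3) set \<Rightarrow> (real^3 \<Rightarrow> 'b::real_normed_vector) \<Rightarrow> bool" where
  "C1 U f \<longleftrightarrow> (\<forall>y\<in>U. f differentiable at y \<and> (\<forall>i. pd i f differentiable at y))"

lemma smooth_C1: "smooth3_on U f \<Longrightarrow> C1 U f"
  unfolding smooth3_on_def C1_def
  by (metis iter_pd.simps(1) iter_pd.simps(2))

lemma C1_diff: "C1 U f \<Longrightarrow> y \<in> U \<Longrightarrow> f differentiable at y"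
  and C1_pd_diff: "C1 U f \<Longrightarrow> y \<in> U \<Longrightarrow> pd i f differentiable at y"
  unfolding C1_def by auto

lemma C1_nth:
  fixes f :: "real^3 \<Rightarrow> ('a::real_normed_vector)^'n"
  assumes "open U" "C1 U f"
  shows "C1 U (\<lambda>z. f z $ k)"
    and "y \<in> U \<Longrightarrow> pd i (\<lambda>z. f z $ k) y = pd i f y $ k"
proof -
  have e: "pd i (\<lambda>z. f z $ k) y = pd i f y $ k" if "y \<in> U" for y i
    using pd_nth C1_diff assms that by blast
  show "y \<in> U \<Longrightarrow> pd i (\<lambda>z. f z $ k) y = pd i f y $ k" by (rule e)
  show "C1 U (\<lambda>z. f z $ k)" unfolding C1_def
  proof (intro ballI conjI allI)
    fix y i assume y: "y \<in> U"
    show "(\<lambda>z. f z $ k) differentiable at y" using diff_nth C1_diff assms y by blast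
    have "(\<lambda>z. pd i f z $ k) differentiable at y" using diff_nth C1_pd_diff assms y by blast
    then show "pd i (\<lambda>z. f z $ k) differentiable at y"
      using pd_transform(2)[of "\<lambda>z. pd i f z $ k" y U] e assms y by auto
  qed
qed

lemma C1_pd2_nth:
  fixes f :: "real^3 \<Rightarrow> ('a::real_normed_vector)^'n"
  assumes "open U" "C1 U f" "x \<in> U"
  shows "pd j (pd i (\<lambda>z. f z $ k)) x = pd j (pd i f) x $ k"
proof -
  have "pd j (pd i (\<lambda>z. f z $ k)) x = pd j (\<lambda>z. pd i f z $ k) x"
    using pd_transform(1)[of "pd i (\<lambda>z. f z $ k)" x U "\<lambda>z. pd i f z $ k"] C1_nth[OF assms(1,2)] assms
    by (auto simp: C1_def)
  also have "\<dots> = pd j (pd i f) x $ k" using pd_nth C1_pd_diff assms by blast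
  finally show ?thesis .
qed

lemma schwarz_C1:
  fixes f :: "real^3 \<Rightarrow> real"
  assumes "open U" "C1 U f" "x \<in> U"
  shows "pd j (pd i f) x = pd i (pd j f) x"
  using schwarz_real[of U x f i j] assms by (auto simp: C1_def)

definition adj3 :: "real^3^3 \<Rightarrow> real^3^3" where
  "adj3 A = vector [vector [A$2$2*A$3$3 - A$2$3*A$3$2, A$1$3*A$3$2 - A$1$2*A$3$3, A$1$2*A$2$3 - A$1$3*A$2$2],
                    vector [A$2$3*A$3$1 - A$2$1*A$3$3, A$1$1*A$3$3 - A$1$3*A$3$1, A$1$3*A$2$1 - A$1$1*A$2$3],
                    vector [A$2$1*A$3$2 - A$2$2*A$3$1, A$1$2*A$3$1 - A$1$1*A$3$2, A$1$1*A$2$2 - A$1$2*A$2$1]]"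

lemma adj3_right: "A ** adj3 A = det A *\<^sub>R mat 1"
  by (simp add: adj3_def matrix_matrix_mult_def sum_3 vec_eq_iff forall_3 det_3 mat_def algebra_simps)

lemma adj3_left: "adj3 A ** A = det A *\<^sub>R mat 1"
  by (simp add: adj3_def matrix_matrix_mult_def sum_3 vec_eq_iff forall_3 det_3 mat_def algebra_simps)

lemma matrix_inv_props:
  fixes A :: "real^3^3"
  assumes "det A \<noteq> 0"
  shows "A ** matrix_inv A = mat 1" "matrix_inv A ** A = mat 1"
proof -
  have "invertible A" using assms invertible_det_nz by blast
  then have "\<exists>A'. A ** A' = mat 1 \<and> A' ** A = mat 1" unfolding invertible_def by blast
  then have "A ** matrix_inv A = mat 1 \<and> matrix_inv A ** A = mat 1"
    unfolding matrix_inv_def by (rule someI_ex)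
  then show "A ** matrix_inv A = mat 1" "matrix_inv A ** A = mat 1" by auto
qed

lemma mm_scaleR_right: "(A::real^'n^'m) ** (c *\<^sub>R B) = c *\<^sub>R (A ** (B::real^'p^'n))"
  by (simp add: vec_eq_iff matrix_matrix_mult_def sum_distrib_left algebra_simps)

lemma matrix_inv_adj3:
  fixes A :: "real^3^3"
  assumes "det A \<noteq> 0"
  shows "matrix_inv A = (1 / det A) *\<^sub>R adj3 A"
proof -
  have "matrix_inv A = matrix_inv A ** (A ** ((1 / det A) *\<^sub>R adj3 A))"
    using adj3_right[of A] assms by (simp add: mm_scaleR_right)
  also have "\<dots> = (matrix_inv A ** A) ** ((1 / det A) *\<^sub>R adj3 A)" by (simp add: matrix_mul_assoc)
  also have "\<dots> = (1 / det A) *\<^sub>R adj3 A" using matrix_inv_props[OF assms] by simp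
  finally show ?thesis .
qed

locale met3 =
  fixes U :: "(real^3) set" and gm :: "real^3 \<Rightarrow> real^3^3"
  assumes U_open: "open U"
    and gm_C1: "C1 U gm"
    and gm_sym: "\<And>y. y \<in> U \<Longrightarrow> transpose (gm y) = gm y"
    and gm_det: "\<And>y. y \<in> U \<Longrightarrow> det (gm y) \<noteq> 0"
begin

definition Lw :: "real^3 \<Rightarrow> 3 \<Rightarrow> 3 \<Rightarrow> 3 \<Rightarrow> real" where
  "Lw y i j l = (1/2) * (pd i (\<lambda>z. gm z $ j $ l) y + pd j (\<lambda>z. gm z $ i $ l) y - pd l (\<lambda>z. gm z $ i $ j) y)"

lemma g_C1: "C1 U (\<lambda>z. gm z $ a $ b)"
proof -
  have "C1 U (\<lambda>z. gm z $ a)" using C1_nth(1)[OF U_open gm_C1] .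
  then show ?thesis using C1_nth(1)[OF U_open, of "\<lambda>z. gm z $ a" b] by simp
qed

lemma g_diff: "y \<in> U \<Longrightarrow> (\<lambda>z. gm z $ a $ b) differentiable at y"
  and g_pd_diff: "y \<in> U \<Longrightarrow> pd i (\<lambda>z. gm z $ a $ b) differentiable at y"
  using g_C1 C1_diff C1_pd_diff by blast+

lemma g_sym: "y \<in> U \<Longrightarrow> gm y $ a $ b = gm y $ b $ a"
proof -
  assume y: "y \<in> U"
  have "transpose (gm y) $ a $ b = gm y $ a $ b" using gm_sym[OF y] by simp
  then show ?thesis by (simp add: transpose_def)
qed

lemma pd_g_sym: "y \<in> U \<Longrightarrow> pd i (\<lambda>z. gm z $ a $ b) y = pd i (\<lambda>z. gm z $ b $ a) y"
  by (rule pd_transform(1)[OF g_diff U_open]) (auto simp: g_sym)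

lemma Gi_diff: "y \<in> U \<Longrightarrow> (\<lambda>z. matrix_inv (gm z) $ k $ l) differentiable at y"
proof -
  assume y: "y \<in> U"
  have e: "adj3 (gm z) $ k $ l / det (gm z) = matrix_inv (gm z) $ k $ l" if "z \<in> U" for z
  proof -
    have "matrix_inv (gm z) = (1 / det (gm z)) *\<^sub>R adj3 (gm z)" by (rule matrix_inv_adj3[OF gm_det[OF that]])
    then have "matrix_inv (gm z) $ k $ l = (1 / det (gm z)) * adj3 (gm z) $ k $ l" by simp
    then show ?thesis by simp
  qed
  have dd: "(\<lambda>z. det (gm z)) differentiable at y"
    unfolding det_3 by (intro differentiable_diff differentiable_add differentiable_mult g_diff[OF y])
  have da: "(\<lambda>z. adj3 (gm z) $ k $ l) differentiable at y"
  proof -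
    have "\<forall>k l. (\<lambda>z. adj3 (gm z) $ k $ l) differentiable at y"
      unfolding forall_3 adj3_def vector_3
      by (intro conjI differentiable_diff differentiable_mult g_diff[OF y])
    then show ?thesis by blast
  qed
  have d: "(\<lambda>z. adj3 (gm z) $ k $ l / det (gm z)) differentiable at y"
    using differentiable_divide[OF da dd gm_det[OF y]] .
  show ?thesis by (rule pd_transform(2)[OF d U_open y e])
qed

lemma Gam_eq: "christoffel gm y k i j = (\<Sum>l\<in>UNIV. matrix_inv (gm y) $ k $ l * Lw y i j l)"
  unfolding christoffel_def Lw_def by (simp add: sum_distrib_left algebra_simps)

lemma Gam_diff: "y \<in> U \<Longrightarrow> (\<lambda>z. christoffel gm z k i j) differentiable at y"
  unfolding christoffel_def
  by (intro differentiable_mult differentiable_const differentiable_sum finite_UNIV ballI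
      differentiable_add differentiable_diff Gi_diff g_pd_diff) simp_all

lemma Lw_sym: "y \<in> U \<Longrightarrow> Lw y i j l = Lw y j i l"
  unfolding Lw_def using pd_g_sym by simp

lemma Gam_sym: "y \<in> U \<Longrightarrow> christoffel gm y k i j = christoffel gm y k j i"
  unfolding Gam_eq using Lw_sym by simp

lemma low: "y \<in> U \<Longrightarrow> (\<Sum>k\<in>UNIV. gm y $ l $ k * christoffel gm y k i j) = Lw y i j l"
proof -
  assume y: "y \<in> U"
  have "(\<Sum>k\<in>UNIV. gm y $ l $ k * christoffel gm y k i j)
      = (\<Sum>k\<in>UNIV. \<Sum>m\<in>UNIV. gm y $ l $ k * matrix_inv (gm y) $ k $ m * Lw y i j m)"
    unfolding Gam_eq by (simp add: sum_distrib_left mult.assoc)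
  also have "\<dots> = (\<Sum>m\<in>UNIV. \<Sum>k\<in>UNIV. gm y $ l $ k * matrix_inv (gm y) $ k $ m * Lw y i j m)"
    by (rule sum.swap)
  also have "\<dots> = (\<Sum>m\<in>UNIV. (\<Sum>k\<in>UNIV. gm y $ l $ k * matrix_inv (gm y) $ k $ m) * Lw y i j m)"
    by (simp add: sum_distrib_right)
  also have "\<dots> = (\<Sum>m\<in>UNIV. (gm y ** matrix_inv (gm y)) $ l $ m * Lw y i j m)"
    by (simp add: matrix_matrix_mult_def)
  also have "\<dots> = (\<Sum>m\<in>UNIV. (mat 1 :: real^3^3) $ l $ m * Lw y i j m)"
    using matrix_inv_props(1)[OF gm_det[OF y]] by simp
  also have "\<dots> = (\<Sum>m\<in>UNIV. if m = l then Lw y i j m else 0)"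
    by (rule sum.cong) (auto simp: mat_def)
  also have "\<dots> = Lw y i j l" by simp
  finally show ?thesis .
qed

lemma compat: assumes y: "y \<in> U" shows "pd m (\<lambda>z. gm z $ a $ b) y = Lw y m a b + Lw y m b a"
  unfolding Lw_def using pd_g_sym[OF y, of m a b] pd_g_sym[OF y, of a m b] pd_g_sym[OF y, of b m a] by (simp add: algebra_simps)

lemma Gam_pd_sym: "x \<in> U \<Longrightarrow> pd m (\<lambda>z. christoffel gm z k i j) x = pd m (\<lambda>z. christoffel gm z k j i) x"
  by (rule pd_transform(1)[OF Gam_diff U_open]) (auto simp: Gam_sym)

lemma Lw_diff: "x \<in> U \<Longrightarrow> (\<lambda>z. Lw z i j l) differentiable at x"
  unfolding Lw_def
  by (intro differentiable_mult differentiable_const differentiable_add differentiable_diff g_pd_diff)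

lemma pd_Lw: "x \<in> U \<Longrightarrow> pd m (\<lambda>z. Lw z i j l) x = (1/2) * (pd m (pd i (\<lambda>z. gm z $ j $ l)) x
    + pd m (pd j (\<lambda>z. gm z $ i $ l)) x - pd m (pd l (\<lambda>z. gm z $ i $ j)) x)"
proof -
  assume x: "x \<in> U"
  have d1: "(\<lambda>z. pd i (\<lambda>z. gm z $ j $ l) z + pd j (\<lambda>z. gm z $ i $ l) z) differentiable at x"
    using g_pd_diff[OF x] by (intro differentiable_add)
  have "pd m (\<lambda>z. Lw z i j l) x = pd m (\<lambda>z. (1/2) *\<^sub>R (pd i (\<lambda>z. gm z $ j $ l) z + pd j (\<lambda>z. gm z $ i $ l) z - pd l (\<lambda>z. gm z $ i $ j) z)) x"
    unfolding Lw_def by simp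
  also have "\<dots> = (1/2) *\<^sub>R pd m (\<lambda>z. (pd i (\<lambda>z. gm z $ j $ l) z + pd j (\<lambda>z. gm z $ i $ l) z) - pd l (\<lambda>z. gm z $ i $ j) z) x"
    by (rule pd_cmult) (intro differentiable_diff d1 g_pd_diff[OF x])
  also have "pd m (\<lambda>z. (pd i (\<lambda>z. gm z $ j $ l) z + pd j (\<lambda>z. gm z $ i $ l) z) - pd l (\<lambda>z. gm z $ i $ j) z) x
     = pd m (\<lambda>z. (pd i (\<lambda>z. gm z $ j $ l) z + pd j (\<lambda>z. gm z $ i $ l) z)) x - pd m (pd l (\<lambda>z. gm z $ i $ j)) x"
    by (rule pd_diff[OF d1 g_pd_diff[OF x]])
  also have "pd m (\<lambda>z. (pd i (\<lambda>z. gm z $ j $ l) z + pd j (\<lambda>z. gm z $ i $ l) z)) x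
     = pd m (pd i (\<lambda>z. gm z $ j $ l)) x + pd m (pd j (\<lambda>z. gm z $ i $ l)) x"
    by (rule pd_add[OF g_pd_diff[OF x] g_pd_diff[OF x]])
  finally show ?thesis by simp
qed

lemma dlow: "x \<in> U \<Longrightarrow> (\<Sum>k\<in>UNIV. gm x $ l $ k * pd m (\<lambda>z. christoffel gm z k i j) x)
   = pd m (\<lambda>z. Lw z i j l) x - (\<Sum>k\<in>UNIV. pd m (\<lambda>z. gm z $ l $ k) x * christoffel gm x k i j)"
proof -
  assume x: "x \<in> U"
  have ds: "(\<lambda>z. \<Sum>k\<in>UNIV. gm z $ l $ k * christoffel gm z k i j) differentiable at x"
    by (intro differentiable_sum ballI differentiable_mult g_diff[OF x] Gam_diff[OF x]) simp
  have "pd m (\<lambda>z. \<Sum>k\<in>UNIV. gm z $ l $ k * christoffel gm z k i j) x = pd m (\<lambda>z. Lw z i j l) x"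
    by (rule pd_transform(1)[OF ds U_open x low])
  moreover have "pd m (\<lambda>z. \<Sum>k\<in>UNIV. gm z $ l $ k * christoffel gm z k i j) x
     = (\<Sum>k\<in>UNIV. pd m (\<lambda>z. gm z $ l $ k) x * christoffel gm x k i j + gm x $ l $ k * pd m (\<lambda>z. christoffel gm z k i j) x)"
    using x g_diff Gam_diff by (simp add: pd_sum pd_mult differentiable_mult)
  ultimately show ?thesis by (simp add: sum.distrib)
qed

end

definition Rco :: "(3 \<Rightarrow> 3 \<Rightarrow> 3 \<Rightarrow> real) \<Rightarrow> (3 \<Rightarrow> 3 \<Rightarrow> 3 \<Rightarrow> 3 \<Rightarrow> real) \<Rightarrow> 3 \<Rightarrow> 3 \<Rightarrow> 3 \<Rightarrow> 3 \<Rightarrow> real" where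
  "Rco \<Gamma> d\<Gamma> m i j k = d\<Gamma> m k i j - d\<Gamma> i k m j + (\<Sum>n\<in>UNIV. \<Gamma> k m n * \<Gamma> n i j - \<Gamma> k i n * \<Gamma> n m j)"

lemma T1: fixes X Y :: "3 \<Rightarrow> real" and dX dY dZ :: "3 \<Rightarrow> 3 \<Rightarrow> real"
  shows "(\<Sum>i\<in>UNIV. ((\<Sum>m\<in>UNIV. X m * dY m i) - (\<Sum>m\<in>UNIV. Y m * dX m i)) * dZ i k)
   = (\<Sum>m\<in>UNIV. X m * (\<Sum>i\<in>UNIV. dY m i * dZ i k)) - (\<Sum>m\<in>UNIV. Y m * (\<Sum>i\<in>UNIV. dX m i * dZ i k))"
  unfolding sum_3 by (simp add: algebra_simps)

lemma T2: fixes X Y :: "3 \<Rightarrow> real" and ddZ :: "3 \<Rightarrow> 3 \<Rightarrow> 3 \<Rightarrow> real"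
  assumes schw: "\<And>m i. ddZ m i k = ddZ i m k"
  shows "(\<Sum>m\<in>UNIV. X m * (\<Sum>i\<in>UNIV. Y i * ddZ m i k)) = (\<Sum>m\<in>UNIV. Y m * (\<Sum>i\<in>UNIV. X i * ddZ m i k))"
  unfolding sum_3 using schw[of 1 2] schw[of 1 3] schw[of 2 3] by (simp add: algebra_simps)

lemma T3: fixes X Y Z :: "3 \<Rightarrow> real" and d\<Gamma> :: "3 \<Rightarrow> 3 \<Rightarrow> 3 \<Rightarrow> 3 \<Rightarrow> real"
  shows "(\<Sum>m\<in>UNIV. X m * (\<Sum>i\<in>UNIV. \<Sum>j\<in>UNIV. d\<Gamma> m k i j * Y i * Z j))
    - (\<Sum>m\<in>UNIV. Y m * (\<Sum>i\<in>UNIV. \<Sum>j\<in>UNIV. d\<Gamma> m k i j * X i * Z j))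
   = (\<Sum>m\<in>UNIV. \<Sum>i\<in>UNIV. \<Sum>j\<in>UNIV. X m * Y i * Z j * (d\<Gamma> m k i j - d\<Gamma> i k m j))"
  unfolding sum_3 by (simp add: algebra_simps)

lemma T4: fixes X Y Z :: "3 \<Rightarrow> real" and dX dY :: "3 \<Rightarrow> 3 \<Rightarrow> real" and \<Gamma> :: "3 \<Rightarrow> 3 \<Rightarrow> 3 \<Rightarrow> real"
  shows "(\<Sum>i\<in>UNIV. \<Sum>j\<in>UNIV. \<Gamma> k i j * ((\<Sum>m\<in>UNIV. X m * dY m i) - (\<Sum>m\<in>UNIV. Y m * dX m i)) * Z j)
   = (\<Sum>m\<in>UNIV. X m * (\<Sum>i\<in>UNIV. \<Sum>j\<in>UNIV. \<Gamma> k i j * dY m i * Z j))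
     - (\<Sum>m\<in>UNIV. Y m * (\<Sum>i\<in>UNIV. \<Sum>j\<in>UNIV. \<Gamma> k i j * dX m i * Z j))"
  unfolding sum_3 by (simp add: algebra_simps)

lemma T5: fixes X Y :: "3 \<Rightarrow> real" and dZ :: "3 \<Rightarrow> 3 \<Rightarrow> real" and \<Gamma> :: "3 \<Rightarrow> 3 \<Rightarrow> 3 \<Rightarrow> real"
  shows "(\<Sum>m\<in>UNIV. X m * (\<Sum>i\<in>UNIV. \<Sum>j\<in>UNIV. \<Gamma> k i j * Y i * dZ m j))
   = (\<Sum>m\<in>UNIV. \<Sum>n\<in>UNIV. \<Gamma> k m n * Y m * (\<Sum>i\<in>UNIV. X i * dZ i n))"
  unfolding sum_3 by (simp add: algebra_simps)

lemma T7: fixes X Y Z :: "3 \<Rightarrow> real" and \<Gamma> :: "3 \<Rightarrow> 3 \<Rightarrow> 3 \<Rightarrow> real"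
  shows "(\<Sum>m\<in>UNIV. \<Sum>n\<in>UNIV. \<Gamma> k m n * X m * (\<Sum>i\<in>UNIV. \<Sum>j\<in>UNIV. \<Gamma> n i j * Y i * Z j))
    - (\<Sum>m\<in>UNIV. \<Sum>n\<in>UNIV. \<Gamma> k m n * Y m * (\<Sum>i\<in>UNIV. \<Sum>j\<in>UNIV. \<Gamma> n i j * X i * Z j))
   = (\<Sum>m\<in>UNIV. \<Sum>i\<in>UNIV. \<Sum>j\<in>UNIV. X m * Y i * Z j * (\<Sum>n\<in>UNIV. \<Gamma> k m n * \<Gamma> n i j - \<Gamma> k i n * \<Gamma> n m j))"
  unfolding sum_3 by (simp add: algebra_simps)

lemma tens_alg:
  fixes X Y Z :: "3 \<Rightarrow> real" and dX dY dZ :: "3 \<Rightarrow> 3 \<Rightarrow> real" and ddZ :: "3 \<Rightarrow> 3 \<Rightarrow> 3 \<Rightarrow> real"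
    and \<Gamma> :: "3 \<Rightarrow> 3 \<Rightarrow> 3 \<Rightarrow> real" and d\<Gamma> :: "3 \<Rightarrow> 3 \<Rightarrow> 3 \<Rightarrow> 3 \<Rightarrow> real"
    and P Q NX NY W :: "3 \<Rightarrow> real"
  assumes schw: "\<And>m i. ddZ m i k = ddZ i m k"
    and P: "\<And>m. P m = (\<Sum>i\<in>UNIV. dY m i * dZ i k) + (\<Sum>i\<in>UNIV. Y i * ddZ m i k)
        + (\<Sum>i\<in>UNIV. \<Sum>j\<in>UNIV. d\<Gamma> m k i j * Y i * Z j) + (\<Sum>i\<in>UNIV. \<Sum>j\<in>UNIV. \<Gamma> k i j * dY m i * Z j)
        + (\<Sum>i\<in>UNIV. \<Sum>j\<in>UNIV. \<Gamma> k i j * Y i * dZ m j)"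
    and Q: "\<And>m. Q m = (\<Sum>i\<in>UNIV. dX m i * dZ i k) + (\<Sum>i\<in>UNIV. X i * ddZ m i k)
        + (\<Sum>i\<in>UNIV. \<Sum>j\<in>UNIV. d\<Gamma> m k i j * X i * Z j) + (\<Sum>i\<in>UNIV. \<Sum>j\<in>UNIV. \<Gamma> k i j * dX m i * Z j)
        + (\<Sum>i\<in>UNIV. \<Sum>j\<in>UNIV. \<Gamma> k i j * X i * dZ m j)"
    and NY: "\<And>n. NY n = (\<Sum>i\<in>UNIV. Y i * dZ i n) + (\<Sum>i\<in>UNIV. \<Sum>j\<in>UNIV. \<Gamma> n i j * Y i * Z j)"
    and NX: "\<And>n. NX n = (\<Sum>i\<in>UNIV. X i * dZ i n) + (\<Sum>i\<in>UNIV. \<Sum>j\<in>UNIV. \<Gamma> n i j * X i * Z j)"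
    and W: "\<And>i. W i = (\<Sum>m\<in>UNIV. X m * dY m i) - (\<Sum>m\<in>UNIV. Y m * dX m i)"
  shows "((\<Sum>m\<in>UNIV. X m * P m) + (\<Sum>m\<in>UNIV. \<Sum>n\<in>UNIV. \<Gamma> k m n * X m * NY n))
       - ((\<Sum>m\<in>UNIV. Y m * Q m) + (\<Sum>m\<in>UNIV. \<Sum>n\<in>UNIV. \<Gamma> k m n * Y m * NX n))
       - ((\<Sum>i\<in>UNIV. W i * dZ i k) + (\<Sum>i\<in>UNIV. \<Sum>j\<in>UNIV. \<Gamma> k i j * W i * Z j))
     = (\<Sum>m\<in>UNIV. \<Sum>i\<in>UNIV. \<Sum>j\<in>UNIV. X m * Y i * Z j * Rco \<Gamma> d\<Gamma> m i j k)"
proof -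
  have R: "(\<Sum>m\<in>UNIV. \<Sum>i\<in>UNIV. \<Sum>j\<in>UNIV. X m * Y i * Z j * Rco \<Gamma> d\<Gamma> m i j k)
    = (\<Sum>m\<in>UNIV. \<Sum>i\<in>UNIV. \<Sum>j\<in>UNIV. X m * Y i * Z j * (d\<Gamma> m k i j - d\<Gamma> i k m j))
    + (\<Sum>m\<in>UNIV. \<Sum>i\<in>UNIV. \<Sum>j\<in>UNIV. X m * Y i * Z j * (\<Sum>n\<in>UNIV. \<Gamma> k m n * \<Gamma> n i j - \<Gamma> k i n * \<Gamma> n m j))"
    unfolding Rco_def sum.distrib[symmetric] by (simp add: algebra_simps)
  have sX: "(\<Sum>m\<in>UNIV. X m * P m) = (\<Sum>m\<in>UNIV. X m * (\<Sum>i\<in>UNIV. dY m i * dZ i k)) + (\<Sum>m\<in>UNIV. X m * (\<Sum>i\<in>UNIV. Y i * ddZ m i k))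
        + (\<Sum>m\<in>UNIV. X m * (\<Sum>i\<in>UNIV. \<Sum>j\<in>UNIV. d\<Gamma> m k i j * Y i * Z j)) + (\<Sum>m\<in>UNIV. X m * (\<Sum>i\<in>UNIV. \<Sum>j\<in>UNIV. \<Gamma> k i j * dY m i * Z j))
        + (\<Sum>m\<in>UNIV. X m * (\<Sum>i\<in>UNIV. \<Sum>j\<in>UNIV. \<Gamma> k i j * Y i * dZ m j))"
    unfolding P by (simp add: distrib_left sum.distrib)
  have sY: "(\<Sum>m\<in>UNIV. Y m * Q m) = (\<Sum>m\<in>UNIV. Y m * (\<Sum>i\<in>UNIV. dX m i * dZ i k)) + (\<Sum>m\<in>UNIV. Y m * (\<Sum>i\<in>UNIV. X i * ddZ m i k))
        + (\<Sum>m\<in>UNIV. Y m * (\<Sum>i\<in>UNIV. \<Sum>j\<in>UNIV. d\<Gamma> m k i j * X i * Z j)) + (\<Sum>m\<in>UNIV. Y m * (\<Sum>i\<in>UNIV. \<Sum>j\<in>UNIV. \<Gamma> k i j * dX m i * Z j))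
        + (\<Sum>m\<in>UNIV. Y m * (\<Sum>i\<in>UNIV. \<Sum>j\<in>UNIV. \<Gamma> k i j * X i * dZ m j))"
    unfolding Q by (simp add: distrib_left sum.distrib)
  have nY: "(\<Sum>m\<in>UNIV. \<Sum>n\<in>UNIV. \<Gamma> k m n * X m * NY n) = (\<Sum>m\<in>UNIV. \<Sum>n\<in>UNIV. \<Gamma> k m n * X m * (\<Sum>i\<in>UNIV. Y i * dZ i n))
     + (\<Sum>m\<in>UNIV. \<Sum>n\<in>UNIV. \<Gamma> k m n * X m * (\<Sum>i\<in>UNIV. \<Sum>j\<in>UNIV. \<Gamma> n i j * Y i * Z j))"
    unfolding NY by (simp add: distrib_left sum.distrib)
  have nX: "(\<Sum>m\<in>UNIV. \<Sum>n\<in>UNIV. \<Gamma> k m n * Y m * NX n) = (\<Sum>m\<in>UNIV. \<Sum>n\<in>UNIV. \<Gamma> k m n * Y m * (\<Sum>i\<in>UNIV. X i * dZ i n))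
     + (\<Sum>m\<in>UNIV. \<Sum>n\<in>UNIV. \<Gamma> k m n * Y m * (\<Sum>i\<in>UNIV. \<Sum>j\<in>UNIV. \<Gamma> n i j * X i * Z j))"
    unfolding NX by (simp add: distrib_left sum.distrib)
  have w1: "(\<Sum>i\<in>UNIV. W i * dZ i k) = (\<Sum>i\<in>UNIV. ((\<Sum>m\<in>UNIV. X m * dY m i) - (\<Sum>m\<in>UNIV. Y m * dX m i)) * dZ i k)"
    unfolding W ..
  have w2: "(\<Sum>i\<in>UNIV. \<Sum>j\<in>UNIV. \<Gamma> k i j * W i * Z j) = (\<Sum>i\<in>UNIV. \<Sum>j\<in>UNIV. \<Gamma> k i j * ((\<Sum>m\<in>UNIV. X m * dY m i) - (\<Sum>m\<in>UNIV. Y m * dX m i)) * Z j)"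
    unfolding W ..
  show ?thesis
    unfolding R sX sY nY nX w1 w2 T1 T4 T2[where X=X and Y=Y and ddZ=ddZ and k=k, OF schw]
    using T3[where X=X and Y=Y and Z=Z and k=k and d\<Gamma>=d\<Gamma>] T7[where X=X and Y=Y and Z=Z and k=k and \<Gamma>=\<Gamma>]
      T5[where X=X and Y=Y and k=k and dZ=dZ and \<Gamma>=\<Gamma>] T5[where X=Y and Y=X and k=k and dZ=dZ and \<Gamma>=\<Gamma>]
    by linarith
qed

lemma alg_P2:
  fixes g :: "3 \<Rightarrow> 3 \<Rightarrow> real" and \<Gamma> :: "3 \<Rightarrow> 3 \<Rightarrow> 3 \<Rightarrow> real" and d\<Gamma> :: "3 \<Rightarrow> 3 \<Rightarrow> 3 \<Rightarrow> 3 \<Rightarrow> real"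
    and L :: "3 \<Rightarrow> 3 \<Rightarrow> 3 \<Rightarrow> real" and dL :: "3 \<Rightarrow> 3 \<Rightarrow> 3 \<Rightarrow> 3 \<Rightarrow> real"
    and dg :: "3 \<Rightarrow> 3 \<Rightarrow> 3 \<Rightarrow> real" and h :: "3 \<Rightarrow> 3 \<Rightarrow> 3 \<Rightarrow> 3 \<Rightarrow> real"
  assumes gsym: "\<And>a b. g a b = g b a"
    and low: "\<And>i j l. (\<Sum>k\<in>UNIV. g l k * \<Gamma> k i j) = L i j l"
    and compat: "\<And>m a b. dg m a b = L m a b + L m b a"
    and dlow: "\<And>m i j l. (\<Sum>k\<in>UNIV. g l k * d\<Gamma> m k i j) = dL m i j l - (\<Sum>k\<in>UNIV. dg m l k * \<Gamma> k i j)"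
    and dL: "\<And>m i j l. dL m i j l = (1/2) * (h m i j l + h m j i l - h m l i j)"
    and schw: "\<And>m a b c. h m a b c = h a m b c"
  shows "(\<Sum>k\<in>UNIV. g l k * Rco \<Gamma> d\<Gamma> m i j k) = - (\<Sum>k\<in>UNIV. g j k * Rco \<Gamma> d\<Gamma> m i l k)"
proof -
  define B where "B a b c d = (\<Sum>k\<in>UNIV. L a b k * \<Gamma> k c d)" for a b c d
  have Bsym: "B a b c d = B c d a b" for a b c d
  proof -
    have "B a b c d = (\<Sum>k\<in>UNIV. \<Sum>p\<in>UNIV. g k p * \<Gamma> p a b * \<Gamma> k c d)"
      unfolding B_def low[symmetric] by (simp add: sum_distrib_right)
    also have "\<dots> = (\<Sum>p\<in>UNIV. \<Sum>k\<in>UNIV. g k p * \<Gamma> p a b * \<Gamma> k c d)" by (rule sum.swap)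
    also have "\<dots> = (\<Sum>p\<in>UNIV. \<Sum>k\<in>UNIV. g p k * \<Gamma> k c d * \<Gamma> p a b)"
      by (simp add: gsym mult.commute mult.left_commute)
    also have "\<dots> = B c d a b"
      unfolding B_def low[symmetric] by (simp add: sum_distrib_right)
    finally show ?thesis .
  qed
  have q: "(\<Sum>k\<in>UNIV. g l k * (\<Sum>n\<in>UNIV. \<Gamma> k a n * \<Gamma> n c d)) = (\<Sum>n\<in>UNIV. L a n l * \<Gamma> n c d)" for l a c d
  proof -
    have "(\<Sum>k\<in>UNIV. g l k * (\<Sum>n\<in>UNIV. \<Gamma> k a n * \<Gamma> n c d)) = (\<Sum>k\<in>UNIV. \<Sum>n\<in>UNIV. g l k * \<Gamma> k a n * \<Gamma> n c d)"
      by (simp add: sum_distrib_left mult.assoc)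
    also have "\<dots> = (\<Sum>n\<in>UNIV. \<Sum>k\<in>UNIV. g l k * \<Gamma> k a n * \<Gamma> n c d)" by (rule sum.swap)
    also have "\<dots> = (\<Sum>n\<in>UNIV. L a n l * \<Gamma> n c d)" unfolding low[symmetric] by (simp add: sum_distrib_right)
    finally show ?thesis .
  qed
  have dgB: "(\<Sum>k\<in>UNIV. dg m l k * \<Gamma> k i j) = B m l i j + (\<Sum>n\<in>UNIV. L m n l * \<Gamma> n i j)" for m l i j
    unfolding B_def compat by (simp add: algebra_simps sum.distrib)
  have key: "(\<Sum>k\<in>UNIV. g l k * Rco \<Gamma> d\<Gamma> m i j k) = dL m i j l - dL i m j l - B m l i j + B i l m j" for m i j l
  proof -
    have "(\<Sum>k\<in>UNIV. g l k * Rco \<Gamma> d\<Gamma> m i j k) =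
       (\<Sum>k\<in>UNIV. g l k * d\<Gamma> m k i j) - (\<Sum>k\<in>UNIV. g l k * d\<Gamma> i k m j)
       + (\<Sum>k\<in>UNIV. g l k * (\<Sum>n\<in>UNIV. \<Gamma> k m n * \<Gamma> n i j)) - (\<Sum>k\<in>UNIV. g l k * (\<Sum>n\<in>UNIV. \<Gamma> k i n * \<Gamma> n m j))"
      unfolding Rco_def by (simp add: algebra_simps sum.distrib sum_subtractf)
    also have "\<dots> = (dL m i j l - (\<Sum>k\<in>UNIV. dg m l k * \<Gamma> k i j)) - (dL i m j l - (\<Sum>k\<in>UNIV. dg i l k * \<Gamma> k m j))
       + (\<Sum>n\<in>UNIV. L m n l * \<Gamma> n i j) - (\<Sum>n\<in>UNIV. L i n l * \<Gamma> n m j)"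
      by (simp only: dlow q)
    also have "\<dots> = dL m i j l - dL i m j l - B m l i j + B i l m j"
      unfolding dgB by simp
    finally show ?thesis .
  qed
  show ?thesis unfolding key dL using Bsym[of m l i j] Bsym[of m j i l] schw[of m i] schw[of i m]
    by (simp add: algebra_simps)
qed

lemma nabla_comp:
  assumes "Z differentiable at y"
  shows "nabla gm Y Z y $ k = (\<Sum>i\<in>UNIV. Y y $ i * pd i (\<lambda>z. Z z $ k) y)
     + (\<Sum>i\<in>UNIV. \<Sum>j\<in>UNIV. christoffel gm y k i j * Y y $ i * Z y $ j)"
  unfolding nabla_def using assms
  by (simp add: fd_expand sum_component pd_nth)

lemma lie_comp:
  assumes "X differentiable at y" "Y differentiable at y"
  shows "lie X Y y $ i = (\<Sum>m\<in>UNIV. X y $ m * pd m (\<lambda>z. Y z $ i) y) - (\<Sum>m\<in>UNIV. Y y $ m * pd m (\<lambda>z. X z $ i) y)"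
  unfolding lie_def using assms
  by (simp add: fd_expand sum_component pd_nth)

context met3
begin

definition Rc :: "real^3 \<Rightarrow> real^3 \<Rightarrow> real^3 \<Rightarrow> real^3 \<Rightarrow> real^3" where
  "Rc x u v w = (\<chi> k. \<Sum>m\<in>UNIV. \<Sum>i\<in>UNIV. \<Sum>j\<in>UNIV. u $ m * v $ i * w $ j *
       Rco (christoffel gm x) (\<lambda>m k i j. pd m (\<lambda>z. christoffel gm z k i j) x) m i j k)"

lemma nab_pd:
  fixes B Z :: "real^3 \<Rightarrow> real^3"
  assumes x: "x \<in> U" and B: "C1 U B" and Z: "C1 U Z"
  shows "nabla gm B Z differentiable at x"
    and "pd m (\<lambda>z. nabla gm B Z z $ k) x =
       (\<Sum>i\<in>UNIV. pd m (\<lambda>z. B z $ i) x * pd i (\<lambda>z. Z z $ k) x) + (\<Sum>i\<in>UNIV. B x $ i * pd m (pd i (\<lambda>z. Z z $ k)) x)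
        + (\<Sum>i\<in>UNIV. \<Sum>j\<in>UNIV. pd m (\<lambda>z. christoffel gm z k i j) x * B x $ i * Z x $ j)
        + (\<Sum>i\<in>UNIV. \<Sum>j\<in>UNIV. christoffel gm x k i j * pd m (\<lambda>z. B z $ i) x * Z x $ j)
        + (\<Sum>i\<in>UNIV. \<Sum>j\<in>UNIV. christoffel gm x k i j * B x $ i * pd m (\<lambda>z. Z z $ j) x)"
proof -
  have Bc: "C1 U (\<lambda>z. B z $ i)" for i using C1_nth(1)[OF U_open B] .
  have Zc: "C1 U (\<lambda>z. Z z $ i)" for i using C1_nth(1)[OF U_open Z] .
  have dB: "(\<lambda>z. B z $ i) differentiable at x" for i using C1_diff[OF Bc x] .
  have dZ: "(\<lambda>z. Z z $ i) differentiable at x" for i using C1_diff[OF Zc x] .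
  have dpZ: "pd j (\<lambda>z. Z z $ i) differentiable at x" for i j using C1_pd_diff[OF Zc x] .
  have dG: "(\<lambda>z. christoffel gm z k i j) differentiable at x" for k i j using Gam_diff[OF x] .
  define N where "N k z = (\<Sum>i\<in>UNIV. B z $ i * pd i (\<lambda>z. Z z $ k) z)
     + (\<Sum>i\<in>UNIV. \<Sum>j\<in>UNIV. christoffel gm z k i j * B z $ i * Z z $ j)" for k z
  have eqN: "N k z = nabla gm B Z z $ k" if "z \<in> U" for k z
    unfolding N_def using nabla_comp[OF C1_diff[OF Z that]] by simp
  have dN: "N k differentiable at x" for k
    unfolding N_def
    by (intro differentiable_add differentiable_sum ballI differentiable_mult dB dZ dpZ dG) simp_all
  have pN: "pd m (\<lambda>z. nabla gm B Z z $ k) x = pd m (N k) x" for k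
    using pd_transform(1)[OF dN U_open x eqN] by simp
  have dnc: "(\<lambda>z. nabla gm B Z z $ k) differentiable at x" for k
    using pd_transform(2)[OF dN U_open x eqN] .
  show "nabla gm B Z differentiable at x" by (rule diff_vec) (rule dnc)
  have "pd m (N k) x =
       (\<Sum>i\<in>UNIV. pd m (\<lambda>z. B z $ i) x * pd i (\<lambda>z. Z z $ k) x + B x $ i * pd m (pd i (\<lambda>z. Z z $ k)) x)
        + (\<Sum>i\<in>UNIV. \<Sum>j\<in>UNIV. (pd m (\<lambda>z. christoffel gm z k i j) x * B x $ i + christoffel gm x k i j * pd m (\<lambda>z. B z $ i) x) * Z x $ j
             + christoffel gm x k i j * B x $ i * pd m (\<lambda>z. Z z $ j) x)"
    unfolding N_def
    by (simp add: pd_add pd_sum pd_mult dB dZ dpZ dG)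
  also have "\<dots> = (\<Sum>i\<in>UNIV. pd m (\<lambda>z. B z $ i) x * pd i (\<lambda>z. Z z $ k) x) + (\<Sum>i\<in>UNIV. B x $ i * pd m (pd i (\<lambda>z. Z z $ k)) x)
        + (\<Sum>i\<in>UNIV. \<Sum>j\<in>UNIV. pd m (\<lambda>z. christoffel gm z k i j) x * B x $ i * Z x $ j)
        + (\<Sum>i\<in>UNIV. \<Sum>j\<in>UNIV. christoffel gm x k i j * pd m (\<lambda>z. B z $ i) x * Z x $ j)
        + (\<Sum>i\<in>UNIV. \<Sum>j\<in>UNIV. christoffel gm x k i j * B x $ i * pd m (\<lambda>z. Z z $ j) x)"
    by (simp add: sum.distrib algebra_simps)
  finally show "pd m (\<lambda>z. nabla gm B Z z $ k) x = \<dots>" using pN by simp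
qed


lemma tensorial:
  assumes x: "x \<in> U" and X: "C1 U X" and Y: "C1 U Y" and Z: "C1 U Z"
  shows "curv gm X Y Z x = Rc x (X x) (Y x) (Z x)"
proof -
  have Zc: "C1 U (\<lambda>z. Z z $ i)" for i using C1_nth(1)[OF U_open Z] .
  show ?thesis
  proof (subst vec_eq_iff, intro allI)
    fix k
    have e1: "nabla gm X (nabla gm Y Z) x $ k = (\<Sum>m\<in>UNIV. X x $ m * pd m (\<lambda>z. nabla gm Y Z z $ k) x)
      + (\<Sum>m\<in>UNIV. \<Sum>n\<in>UNIV. christoffel gm x k m n * X x $ m * nabla gm Y Z x $ n)"
      using nabla_comp[OF nab_pd(1)[OF x Y Z]] .
    have e2: "nabla gm Y (nabla gm X Z) x $ k = (\<Sum>m\<in>UNIV. Y x $ m * pd m (\<lambda>z. nabla gm X Z z $ k) x)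
      + (\<Sum>m\<in>UNIV. \<Sum>n\<in>UNIV. christoffel gm x k m n * Y x $ m * nabla gm X Z x $ n)"
      using nabla_comp[OF nab_pd(1)[OF x X Z]] .
    have e3: "nabla gm (lie X Y) Z x $ k = (\<Sum>i\<in>UNIV. lie X Y x $ i * pd i (\<lambda>z. Z z $ k) x)
      + (\<Sum>i\<in>UNIV. \<Sum>j\<in>UNIV. christoffel gm x k i j * lie X Y x $ i * Z x $ j)"
      using nabla_comp[OF C1_diff[OF Z x]] .
    have th: "((\<Sum>m\<in>UNIV. X x $ m * pd m (\<lambda>z. nabla gm Y Z z $ k) x)
      + (\<Sum>m\<in>UNIV. \<Sum>n\<in>UNIV. christoffel gm x k m n * X x $ m * nabla gm Y Z x $ n))
      - ((\<Sum>m\<in>UNIV. Y x $ m * pd m (\<lambda>z. nabla gm X Z z $ k) x)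
      + (\<Sum>m\<in>UNIV. \<Sum>n\<in>UNIV. christoffel gm x k m n * Y x $ m * nabla gm X Z x $ n))
      - ((\<Sum>i\<in>UNIV. lie X Y x $ i * pd i (\<lambda>z. Z z $ k) x)
      + (\<Sum>i\<in>UNIV. \<Sum>j\<in>UNIV. christoffel gm x k i j * lie X Y x $ i * Z x $ j))
      = (\<Sum>m\<in>UNIV. \<Sum>i\<in>UNIV. \<Sum>j\<in>UNIV. X x $ m * Y x $ i * Z x $ j *
       Rco (christoffel gm x) (\<lambda>m k i j. pd m (\<lambda>z. christoffel gm z k i j) x) m i j k)"
      by (rule tens_alg[where X="\<lambda>m. X x $ m" and Y="\<lambda>m. Y x $ m" and Z="\<lambda>m. Z x $ m"
          and dX="\<lambda>m i. pd m (\<lambda>z. X z $ i) x" and dY="\<lambda>m i. pd m (\<lambda>z. Y z $ i) x"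
          and dZ="\<lambda>i k. pd i (\<lambda>z. Z z $ k) x" and ddZ="\<lambda>m i k. pd m (pd i (\<lambda>z. Z z $ k)) x"
          and \<Gamma>="christoffel gm x" and d\<Gamma>="\<lambda>m k i j. pd m (\<lambda>z. christoffel gm z k i j) x"
          and P="\<lambda>m. pd m (\<lambda>z. nabla gm Y Z z $ k) x" and Q="\<lambda>m. pd m (\<lambda>z. nabla gm X Z z $ k) x"
          and NY="\<lambda>n. nabla gm Y Z x $ n" and NX="\<lambda>n. nabla gm X Z x $ n"
          and W="\<lambda>i. lie X Y x $ i" and k=k,
          OF schwarz_C1[OF U_open Zc x] nab_pd(2)[OF x Y Z] nab_pd(2)[OF x X Z]
             nabla_comp[OF C1_diff[OF Z x]] nabla_comp[OF C1_diff[OF Z x]]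
             lie_comp[OF C1_diff[OF X x] C1_diff[OF Y x]]])
    show "curv gm X Y Z x $ k = Rc x (X x) (Y x) (Z x) $ k"
      unfolding curv_def Rc_def vector_minus_component vec_lambda_beta e1 e2 e3 by (rule th)
  qed
qed

end

lemma sum_perm3: "(\<Sum>m\<in>A. \<Sum>i\<in>B. \<Sum>j\<in>C. f m i j) = (\<Sum>j\<in>C. \<Sum>m\<in>A. \<Sum>i\<in>B. f m i j)"
proof -
  have "(\<Sum>m\<in>A. \<Sum>i\<in>B. \<Sum>j\<in>C. f m i j) = (\<Sum>m\<in>A. \<Sum>j\<in>C. \<Sum>i\<in>B. f m i j)"
    by (rule sum.cong[OF refl]) (rule sum.swap)
  also have "\<dots> = (\<Sum>j\<in>C. \<Sum>m\<in>A. \<Sum>i\<in>B. f m i j)" by (rule sum.swap)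
  finally show ?thesis .
qed

lemma Rco_anti: "Rco \<Gamma> d\<Gamma> m i j k = - Rco \<Gamma> d\<Gamma> i m j k"
  unfolding Rco_def by (simp add: sum_subtractf)

lemma Rco_bianchi:
  assumes "\<And>k a b. \<Gamma> k a b = \<Gamma> k b a" "\<And>m k a b. d\<Gamma> m k a b = d\<Gamma> m k b a"
  shows "Rco \<Gamma> d\<Gamma> m i j k + Rco \<Gamma> d\<Gamma> i j m k + Rco \<Gamma> d\<Gamma> j m i k = 0"
proof -
  have s: "(\<Sum>n\<in>UNIV. \<Gamma> k m n * \<Gamma> n i j - \<Gamma> k i n * \<Gamma> n m j)
      + (\<Sum>n\<in>UNIV. \<Gamma> k i n * \<Gamma> n j m - \<Gamma> k j n * \<Gamma> n i m)
      + (\<Sum>n\<in>UNIV. \<Gamma> k j n * \<Gamma> n m i - \<Gamma> k m n * \<Gamma> n j i) = 0"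
    using assms(1) by (simp add: sum_subtractf)
  show ?thesis unfolding Rco_def using s assms(2)[of m k i j] assms(2)[of i k j m] assms(2)[of j k m i]
    by linarith
qed

context met3
begin

lemma Rc_comp: "Rc x u v w $ k = (\<Sum>m\<in>UNIV. \<Sum>i\<in>UNIV. \<Sum>j\<in>UNIV. u $ m * v $ i * w $ j *
       Rco (christoffel gm x) (\<lambda>m k i j. pd m (\<lambda>z. christoffel gm z k i j) x) m i j k)"
  unfolding Rc_def by simp

lemma Rc_lin1: "Rc x (a *\<^sub>R u + b *\<^sub>R u') v w = a *\<^sub>R Rc x u v w + b *\<^sub>R Rc x u' v w"
  by (simp add: vec_eq_iff Rc_comp algebra_simps sum.distrib sum_distrib_left)

lemma Rc_lin2: "Rc x u (a *\<^sub>R v + b *\<^sub>R v') w = a *\<^sub>R Rc x u v w + b *\<^sub>R Rc x u v' w"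
  by (simp add: vec_eq_iff Rc_comp algebra_simps sum.distrib sum_distrib_left)

lemma Rc_lin3: "Rc x u v (a *\<^sub>R w + b *\<^sub>R w') = a *\<^sub>R Rc x u v w + b *\<^sub>R Rc x u v w'"
  by (simp add: vec_eq_iff Rc_comp algebra_simps sum.distrib sum_distrib_left)

lemma Rc_anti: "Rc x u v w = - Rc x v u w"
proof (subst vec_eq_iff, intro allI)
  fix k
  let ?R = "Rco (christoffel gm x) (\<lambda>m k i j. pd m (\<lambda>z. christoffel gm z k i j) x)"
  have "Rc x v u w $ k = (\<Sum>m\<in>UNIV. \<Sum>i\<in>UNIV. \<Sum>j\<in>UNIV. v $ m * u $ i * w $ j * ?R m i j k)"
    by (rule Rc_comp)
  also have "\<dots> = (\<Sum>i\<in>UNIV. \<Sum>m\<in>UNIV. \<Sum>j\<in>UNIV. v $ m * u $ i * w $ j * ?R m i j k)"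
    by (rule sum.swap)
  also have "\<dots> = (\<Sum>i\<in>UNIV. \<Sum>m\<in>UNIV. \<Sum>j\<in>UNIV. - (u $ i * v $ m * w $ j * ?R i m j k))"
    by (intro sum.cong refl) (subst Rco_anti, simp)
  also have "\<dots> = - Rc x u v w $ k" unfolding Rc_comp by (simp add: sum_negf)
  finally show "Rc x u v w $ k = (- Rc x v u w) $ k" by simp
qed

lemma Rc_bianchi: assumes x: "x \<in> U" shows "Rc x u v w + Rc x v w u + Rc x w u v = 0"
proof (subst vec_eq_iff, intro allI)
  fix k
  let ?R = "Rco (christoffel gm x) (\<lambda>m k i j. pd m (\<lambda>z. christoffel gm z k i j) x)"
  have B: "?R m i j k + ?R i j m k + ?R j m i k = 0" for m i j
    by (rule Rco_bianchi) (use Gam_sym[OF x] Gam_pd_sym[OF x] in auto)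
  have e2: "Rc x v w u $ k = (\<Sum>m\<in>UNIV. \<Sum>i\<in>UNIV. \<Sum>j\<in>UNIV. u $ m * v $ i * w $ j * ?R i j m k)"
    unfolding Rc_comp by (subst sum_perm3) (simp add: ac_simps)
  have e3: "Rc x w u v $ k = (\<Sum>m\<in>UNIV. \<Sum>i\<in>UNIV. \<Sum>j\<in>UNIV. u $ m * v $ i * w $ j * ?R j m i k)"
    unfolding Rc_comp by (subst (2) sum_perm3) (simp add: ac_simps)
  have "Rc x u v w $ k + Rc x v w u $ k + Rc x w u v $ k
     = (\<Sum>m\<in>UNIV. \<Sum>i\<in>UNIV. \<Sum>j\<in>UNIV. u $ m * v $ i * w $ j * (?R m i j k + ?R i j m k + ?R j m i k))"
    unfolding e2 e3 unfolding Rc_comp by (simp add: sum.distrib[symmetric] algebra_simps)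
  also have "\<dots> = 0" by (simp add: B)
  finally show "(Rc x u v w + Rc x v w u + Rc x w u v) $ k = 0 $ k" by simp
qed

end

lemma push3: "(\<Sum>a\<in>A. \<Sum>m\<in>M. \<Sum>i\<in>I. \<Sum>j\<in>J. f a m i j) = (\<Sum>m\<in>M. \<Sum>i\<in>I. \<Sum>j\<in>J. \<Sum>a\<in>A. f a m i j)"
proof -
  have "(\<Sum>a\<in>A. \<Sum>m\<in>M. \<Sum>i\<in>I. \<Sum>j\<in>J. f a m i j) = (\<Sum>m\<in>M. \<Sum>a\<in>A. \<Sum>i\<in>I. \<Sum>j\<in>J. f a m i j)"
    by (rule sum.swap)
  also have "\<dots> = (\<Sum>m\<in>M. \<Sum>i\<in>I. \<Sum>a\<in>A. \<Sum>j\<in>J. f a m i j)"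
    by (rule sum.cong[OF refl]) (rule sum.swap)
  also have "\<dots> = (\<Sum>m\<in>M. \<Sum>i\<in>I. \<Sum>j\<in>J. \<Sum>a\<in>A. f a m i j)"
    by (intro sum.cong[OF refl]) (rule sum.swap)
  finally show ?thesis .
qed

context met3
begin

definition gg :: "real^3 \<Rightarrow> real^3 \<Rightarrow> real^3 \<Rightarrow> real" where
  "gg x p q = p \<bullet> (gm x *v q)"

lemma gg_alt: "x \<in> U \<Longrightarrow> gg x p q = (\<Sum>l\<in>UNIV. q $ l * (\<Sum>k\<in>UNIV. gm x $ l $ k * p $ k))"
proof -
  assume x: "x \<in> U"
  have "gg x p q = (\<Sum>k\<in>UNIV. \<Sum>l\<in>UNIV. q $ l * gm x $ k $ l * p $ k)"
    unfolding gg_def inner_vec_def matrix_vector_mult_def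
    by (simp add: sum_distrib_left ac_simps)
  also have "\<dots> = (\<Sum>l\<in>UNIV. \<Sum>k\<in>UNIV. q $ l * gm x $ k $ l * p $ k)" by (rule sum.swap)
  also have "\<dots> = (\<Sum>l\<in>UNIV. q $ l * (\<Sum>k\<in>UNIV. gm x $ l $ k * p $ k))"
    by (simp add: sum_distrib_left ac_simps g_sym[OF x])
  finally show ?thesis .
qed

lemma RL_anti: assumes x: "x \<in> U"
  shows "(\<Sum>k\<in>UNIV. gm x $ l $ k * Rco (christoffel gm x) (\<lambda>m k i j. pd m (\<lambda>z. christoffel gm z k i j) x) m i j k)
   = - (\<Sum>k\<in>UNIV. gm x $ j $ k * Rco (christoffel gm x) (\<lambda>m k i j. pd m (\<lambda>z. christoffel gm z k i j) x) m i l k)"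
  by (rule alg_P2[where g="\<lambda>a b. gm x $ a $ b" and \<Gamma>="christoffel gm x"
      and d\<Gamma>="\<lambda>m k i j. pd m (\<lambda>z. christoffel gm z k i j) x" and L="Lw x"
      and dL="\<lambda>m i j l. pd m (\<lambda>z. Lw z i j l) x" and dg="\<lambda>m a b. pd m (\<lambda>z. gm z $ a $ b) x"
      and h="\<lambda>m a b c. pd m (pd a (\<lambda>z. gm z $ b $ c)) x",
      OF g_sym[OF x] low[OF x] compat[OF x] dlow[OF x] pd_Lw[OF x] schwarz_C1[OF U_open g_C1 x]])

lemma gg_Rc: assumes x: "x \<in> U"
  shows "gg x (Rc x u v w) z = (\<Sum>m\<in>UNIV. \<Sum>i\<in>UNIV. \<Sum>j\<in>UNIV. \<Sum>l\<in>UNIV. u $ m * v $ i * w $ j * z $ l *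
     (\<Sum>k\<in>UNIV. gm x $ l $ k * Rco (christoffel gm x) (\<lambda>m k i j. pd m (\<lambda>z. christoffel gm z k i j) x) m i j k))"
proof -
  let ?R = "Rco (christoffel gm x) (\<lambda>m k i j. pd m (\<lambda>z. christoffel gm z k i j) x)"
  have "gg x (Rc x u v w) z = (\<Sum>l\<in>UNIV. \<Sum>k\<in>UNIV. \<Sum>m\<in>UNIV. \<Sum>i\<in>UNIV. \<Sum>j\<in>UNIV. z $ l * gm x $ l $ k * (u $ m * v $ i * w $ j * ?R m i j k))"
    unfolding gg_alt[OF x] Rc_comp by (simp add: sum_distrib_left mult.assoc)
  also have "\<dots> = (\<Sum>l\<in>UNIV. \<Sum>m\<in>UNIV. \<Sum>i\<in>UNIV. \<Sum>j\<in>UNIV. \<Sum>k\<in>UNIV. z $ l * gm x $ l $ k * (u $ m * v $ i * w $ j * ?R m i j k))"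
    by (rule sum.cong[OF refl]) (rule push3)
  also have "\<dots> = (\<Sum>m\<in>UNIV. \<Sum>i\<in>UNIV. \<Sum>j\<in>UNIV. \<Sum>l\<in>UNIV. \<Sum>k\<in>UNIV. z $ l * gm x $ l $ k * (u $ m * v $ i * w $ j * ?R m i j k))"
    by (rule push3)
  also have "\<dots> = (\<Sum>m\<in>UNIV. \<Sum>i\<in>UNIV. \<Sum>j\<in>UNIV. \<Sum>l\<in>UNIV. u $ m * v $ i * w $ j * z $ l * (\<Sum>k\<in>UNIV. gm x $ l $ k * ?R m i j k))"
    by (simp add: sum_distrib_left ac_simps)
  finally show ?thesis .
qed

lemma Rc_P2: assumes x: "x \<in> U"
  shows "gg x (Rc x u v w) z = - gg x (Rc x u v z) w"
proof -
  let ?R = "Rco (christoffel gm x) (\<lambda>m k i j. pd m (\<lambda>z. christoffel gm z k i j) x)"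
  let ?L = "\<lambda>m i j l. (\<Sum>k\<in>UNIV. gm x $ l $ k * ?R m i j k)"
  have "gg x (Rc x u v z) w = (\<Sum>m\<in>UNIV. \<Sum>i\<in>UNIV. \<Sum>j\<in>UNIV. \<Sum>l\<in>UNIV. u $ m * v $ i * z $ j * w $ l * ?L m i j l)"
    by (rule gg_Rc[OF x])
  also have "\<dots> = (\<Sum>m\<in>UNIV. \<Sum>i\<in>UNIV. \<Sum>l\<in>UNIV. \<Sum>j\<in>UNIV. u $ m * v $ i * z $ j * w $ l * ?L m i j l)"
    by (rule sum.cong[OF refl], rule sum.cong[OF refl], rule sum.swap)
  also have "\<dots> = (\<Sum>m\<in>UNIV. \<Sum>i\<in>UNIV. \<Sum>l\<in>UNIV. \<Sum>j\<in>UNIV. - (u $ m * v $ i * w $ l * z $ j * ?L m i l j))"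
    apply (intro sum.cong refl)
    subgoal for m i l j using RL_anti[OF x, of l m i j] by simp
    done
  also have "\<dots> = - gg x (Rc x u v w) z"
    unfolding gg_Rc[OF x] by (simp add: sum_negf)
  finally show ?thesis by simp
qed

end

lemma MC: fixes v A B :: "3 \<Rightarrow> real" and g dA dB :: "3 \<Rightarrow> 3 \<Rightarrow> real" and dg \<Gamma> :: "3 \<Rightarrow> 3 \<Rightarrow> 3 \<Rightarrow> real"
  assumes gsym: "\<And>a b. g a b = g b a"
    and dg: "\<And>m a b. dg m a b = (\<Sum>p\<in>UNIV. g b p * \<Gamma> p m a) + (\<Sum>p\<in>UNIV. g a p * \<Gamma> p m b)"
  shows "(\<Sum>m\<in>UNIV. v m * (\<Sum>l\<in>UNIV. \<Sum>k\<in>UNIV. dB m l * g l k * A k + B l * dg m l k * A k + B l * g l k * dA m k))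
   = (\<Sum>l\<in>UNIV. B l * (\<Sum>k\<in>UNIV. g l k * ((\<Sum>i\<in>UNIV. v i * dA i k) + (\<Sum>i\<in>UNIV. \<Sum>j\<in>UNIV. \<Gamma> k i j * v i * A j))))
   + (\<Sum>l\<in>UNIV. A l * (\<Sum>k\<in>UNIV. g l k * ((\<Sum>i\<in>UNIV. v i * dB i k) + (\<Sum>i\<in>UNIV. \<Sum>j\<in>UNIV. \<Gamma> k i j * v i * B j))))"
  unfolding dg sum_3 using gsym[of 1 2] gsym[of 1 3] gsym[of 2 3] by (simp add: algebra_simps)

lemma iter_pd_const: "iter_pd is (\<lambda>_. c) = (\<lambda>_. if is = [] then c else 0)"
  by (induction "is") (auto simp: pd_def)

lemma smooth_cf: "smooth3_on U (cf v)"
  unfolding smooth3_on_def cf_def iter_pd_const by auto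

lemma C1_cf: "C1 U (cf v)" using smooth_C1[OF smooth_cf] .

context met3
begin

lemma gg_sym: "y \<in> U \<Longrightarrow> gg y p q = gg y q p"
  using gg_alt[of y p q] gg_alt[of y q p]
  unfolding gg_def inner_vec_def matrix_vector_mult_def
  by (simp add: inner_vec_def)

lemma gg_deriv:
  assumes x: "x \<in> U" and A: "C1 U A" and B: "C1 U B"
  shows "(\<Sum>m\<in>UNIV. v $ m * pd m (\<lambda>z. gg z (A z) (B z)) x)
     = gg x (nabla gm (cf v) A x) (B x) + gg x (A x) (nabla gm (cf v) B x)"
proof -
  have Ac: "C1 U (\<lambda>z. A z $ i)" for i using C1_nth(1)[OF U_open A] .
  have Bc: "C1 U (\<lambda>z. B z $ i)" for i using C1_nth(1)[OF U_open B] .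
  have dA: "(\<lambda>z. A z $ i) differentiable at x" for i using C1_diff[OF Ac x] .
  have dB: "(\<lambda>z. B z $ i) differentiable at x" for i using C1_diff[OF Bc x] .
  define F where "F z = (\<Sum>l\<in>UNIV. \<Sum>k\<in>UNIV. B z $ l * gm z $ l $ k * A z $ k)" for z
  have eF: "F z = gg z (A z) (B z)" if "z \<in> U" for z
    unfolding F_def gg_alt[OF that] by (simp add: sum_distrib_left mult.assoc)
  have dF: "F differentiable at x" unfolding F_def
    by (intro differentiable_sum ballI differentiable_mult dA dB g_diff[OF x]) simp_all
  have pF: "pd m (\<lambda>z. gg z (A z) (B z)) x = pd m F x" for m
    using pd_transform(1)[OF dF U_open x eF] by simp
  have pF2: "pd m F x = (\<Sum>l\<in>UNIV. \<Sum>k\<in>UNIV. pd m (\<lambda>z. B z $ l) x * gm x $ l $ k * A x $ k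
      + B x $ l * pd m (\<lambda>z. gm z $ l $ k) x * A x $ k + B x $ l * gm x $ l $ k * pd m (\<lambda>z. A z $ k) x)" for m
    unfolding F_def by (simp add: pd_sum pd_mult dA dB g_diff[OF x] algebra_simps)
  have dg: "pd m (\<lambda>z. gm z $ a $ b) x = (\<Sum>p\<in>UNIV. gm x $ b $ p * christoffel gm x p m a)
      + (\<Sum>p\<in>UNIV. gm x $ a $ p * christoffel gm x p m b)" for m a b
    using compat[OF x, of m a b] low[OF x, of b m a] low[OF x, of a m b] by simp
  have nA: "nabla gm (cf v) A x $ k = (\<Sum>i\<in>UNIV. v $ i * pd i (\<lambda>z. A z $ k) x)
     + (\<Sum>i\<in>UNIV. \<Sum>j\<in>UNIV. christoffel gm x k i j * v $ i * A x $ j)" for k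
    using nabla_comp[OF C1_diff[OF A x], of gm "cf v" k] by (simp add: cf_def)
  have nB: "nabla gm (cf v) B x $ k = (\<Sum>i\<in>UNIV. v $ i * pd i (\<lambda>z. B z $ k) x)
     + (\<Sum>i\<in>UNIV. \<Sum>j\<in>UNIV. christoffel gm x k i j * v $ i * B x $ j)" for k
    using nabla_comp[OF C1_diff[OF B x], of gm "cf v" k] by (simp add: cf_def)
  have "(\<Sum>m\<in>UNIV. v $ m * pd m (\<lambda>z. gg z (A z) (B z)) x)
     = (\<Sum>l\<in>UNIV. B x $ l * (\<Sum>k\<in>UNIV. gm x $ l $ k * nabla gm (cf v) A x $ k))
     + (\<Sum>l\<in>UNIV. A x $ l * (\<Sum>k\<in>UNIV. gm x $ l $ k * nabla gm (cf v) B x $ k))"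
    unfolding pF pF2 nA nB
    by (rule MC[where g="\<lambda>a b. gm x $ a $ b" and dg="\<lambda>m a b. pd m (\<lambda>z. gm z $ a $ b) x"
        and \<Gamma>="christoffel gm x", OF g_sym[OF x] dg])
  also have "\<dots> = gg x (nabla gm (cf v) A x) (B x) + gg x (nabla gm (cf v) B x) (A x)"
    unfolding gg_alt[OF x] ..
  finally show ?thesis using gg_sym[OF x] by simp
qed

lemma nabla_transform:
  assumes x: "x \<in> U" and d: "W' differentiable at x" and e: "\<And>z. z \<in> U \<Longrightarrow> W z = W' z"
  shows "nabla gm X W x = nabla gm X W' x"
proof -
  have "frechet_derivative W' (at x) = frechet_derivative W (at x)"
    by (rule fd_transform[OF d U_open x]) (simp add: e)
  then show ?thesis unfolding nabla_def using e[OF x] by simp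
qed

lemma nabla_scale:
  assumes d: "W differentiable at x"
  shows "nabla gm X (\<lambda>z. c *\<^sub>R W z) x = c *\<^sub>R nabla gm X W x"
proof -
  have "frechet_derivative (\<lambda>z. c *\<^sub>R W z) (at x) = (\<lambda>h. c *\<^sub>R frechet_derivative W (at x) h)"
    using frechet_derivative_at[OF has_derivative_scaleR_right[OF fd_works[OF d]]] by simp
  then show ?thesis unfolding nabla_def
    by (simp add: vec_eq_iff sum_distrib_left algebra_simps)
qed


lemma P4:
  assumes SAS: "eps_para_sasakian U \<phi> \<xi> \<eta> gm \<epsilon>" and x: "x \<in> U"
  shows "Rc x u v (\<xi> x) = (\<eta> x \<bullet> u) *\<^sub>R v - (\<eta> x \<bullet> v) *\<^sub>R u"
proof -
  have AP: "eps_almost_paracontact U \<phi> \<xi> \<eta> gm \<epsilon>" using SAS unfolding eps_para_sasakian_def by blast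
  have eps: "\<epsilon> * \<epsilon> = 1" "\<epsilon> \<noteq> 0" using AP unfolding eps_almost_paracontact_def by auto
  have sphi: "smooth3_on U \<phi>" and sxi: "smooth3_on U \<xi>" using AP unfolding eps_almost_paracontact_def by auto
  have A1: "\<And>y v. y \<in> U \<Longrightarrow> \<phi> y *v (\<phi> y *v v) = v - (\<eta> y \<bullet> v) *\<^sub>R \<xi> y"
    and A2: "\<And>y. y \<in> U \<Longrightarrow> \<eta> y \<bullet> \<xi> y = 1"
    and A3: "\<And>y. y \<in> U \<Longrightarrow> \<phi> y *v \<xi> y = 0"
    and A4: "\<And>y v. y \<in> U \<Longrightarrow> \<eta> y \<bullet> (\<phi> y *v v) = 0"
    and A5: "\<And>y v w. y \<in> U \<Longrightarrow> (\<phi> y *v v) \<bullet> (gm y *v (\<phi> y *v w)) = v \<bullet> (gm y *v w) - \<epsilon> * (\<eta> y \<bullet> v) * (\<eta> y \<bullet> w)"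
    using AP unfolding eps_almost_paracontact_def by auto
  have Sas: "\<And>X Y y. smooth_vf U X \<Longrightarrow> smooth_vf U Y \<Longrightarrow> y \<in> U \<Longrightarrow>
        nabla gm X (\<lambda>y. \<phi> y *v Y y) y - \<phi> y *v nabla gm X Y y
        = - (ginner gm (\<lambda>y. \<phi> y *v X y) (\<lambda>y. \<phi> y *v Y y) y) *\<^sub>R \<xi> y
          - (\<epsilon> * (\<eta> y \<bullet> Y y)) *\<^sub>R (\<phi> y *v (\<phi> y *v X y))"
    using SAS unfolding eps_para_sasakian_def by blast
  have C1xi: "C1 U \<xi>" using smooth_C1[OF sxi] .
  have svf_cf: "smooth_vf U (cf w)" for w unfolding smooth_vf_def by (rule smooth_cf)
  have svf_xi: "smooth_vf U \<xi>" unfolding smooth_vf_def by (rule sxi)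
  have D1: "gg y p (\<xi> y) = \<epsilon> * (\<eta> y \<bullet> p)" if y: "y \<in> U" for y p
    using A5[OF y, of p "\<xi> y"] A3[OF y] A2[OF y] unfolding gg_def by simp
  have nxi: "nabla gm (cf w) \<xi> y = \<epsilon> *\<^sub>R (\<phi> y *v w)" if y: "y \<in> U" for y w
  proof -
    define N where "N = nabla gm (cf w) \<xi> y"
    have z1: "nabla gm (cf w) (\<lambda>z. \<phi> z *v \<xi> z) y = 0"
    proof -
      have "nabla gm (cf w) (\<lambda>z. \<phi> z *v \<xi> z) y = nabla gm (cf w) (\<lambda>z. 0) y"
        by (rule nabla_transform[OF y]) (auto simp: A3)
      also have "\<dots> = 0" unfolding nabla_def by (simp add: vec_eq_iff)
      finally show ?thesis .
    qed
    have z2: "ginner gm (\<lambda>z. \<phi> z *v cf w z) (\<lambda>z. \<phi> z *v \<xi> z) y = 0"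
      by (simp add: ginner_def A3[OF y])
    have e1: "\<phi> y *v N = \<epsilon> *\<^sub>R (\<phi> y *v (\<phi> y *v w))"
      using Sas[OF svf_cf svf_xi y, of w] z1 z2 A2[OF y] unfolding N_def by (simp add: cf_def)
    have e3: "\<phi> y *v (\<phi> y *v N) = \<epsilon> *\<^sub>R (\<phi> y *v w)"
      unfolding e1 matrix_vector_mult_scaleR A1[OF y, of "\<phi> y *v w"] A4[OF y] by simp
    have e4: "N = \<epsilon> *\<^sub>R (\<phi> y *v w) + (\<eta> y \<bullet> N) *\<^sub>R \<xi> y"
      using A1[OF y, of N] e3 by (simp add: algebra_simps)
    have cst: "gg z (\<xi> z) (\<xi> z) = \<epsilon>" if "z \<in> U" for z using D1[OF that] A2[OF that] by simp
    have p0: "pd m (\<lambda>z. gg z (\<xi> z) (\<xi> z)) y = 0" for m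
    proof -
      have "pd m (\<lambda>z. \<epsilon>) y = pd m (\<lambda>z. gg z (\<xi> z) (\<xi> z)) y"
        by (rule pd_transform(1)[OF differentiable_const U_open y]) (simp add: cst)
      then show ?thesis by (simp add: pd_const)
    qed
    have "gg y N (\<xi> y) + gg y (\<xi> y) N = 0"
      using gg_deriv[OF y C1xi C1xi, of w] p0 unfolding N_def by simp
    then have "gg y N (\<xi> y) = 0" using gg_sym[OF y, of N "\<xi> y"] by simp
    then have "\<eta> y \<bullet> N = 0" using D1[OF y, of N] eps by simp
    then show ?thesis using e4 unfolding N_def by simp
  qed
  have dphi: "(\<lambda>z. \<phi> z *v w) differentiable at x" for w
  proof -
    have C1p: "C1 U \<phi>" using smooth_C1[OF sphi] .
    have c: "C1 U (\<lambda>z. \<phi> z $ k $ j)" for k j using C1_nth(1)[OF U_open C1_nth(1)[OF U_open C1p]] .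
    show ?thesis
      unfolding matrix_vector_mult_def
      by (rule diff_vec) (simp, intro differentiable_sum ballI differentiable_mult differentiable_const C1_diff[OF c x]; simp)
  qed
  have c1: "nabla gm (cf a) (nabla gm (cf b) \<xi>) x = \<epsilon> *\<^sub>R nabla gm (cf a) (\<lambda>z. \<phi> z *v b) x" for a b
  proof -
    have "nabla gm (cf a) (nabla gm (cf b) \<xi>) x = nabla gm (cf a) (\<lambda>z. \<epsilon> *\<^sub>R (\<phi> z *v b)) x"
      by (rule nabla_transform[OF x differentiable_scaleR[OF differentiable_const dphi]]) (rule nxi)
    also have "\<dots> = \<epsilon> *\<^sub>R nabla gm (cf a) (\<lambda>z. \<phi> z *v b) x" by (rule nabla_scale[OF dphi])
    finally show ?thesis .
  qed
  have c3: "nabla gm (lie (cf u) (cf v)) \<xi> x = 0"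
  proof -
    have "lie (cf u) (cf v) x = 0" unfolding lie_def cf_def by simp
    then show ?thesis unfolding nabla_def using fd_expand[OF C1_diff[OF C1xi x]]
      by (simp add: vec_eq_iff)
  qed
  have GV: "nabla gm (cf a) (cf b) x = (\<chi> k. \<Sum>i\<in>UNIV. \<Sum>j\<in>UNIV. christoffel gm x k i j * a $ i * b $ j)" for a b
    unfolding nabla_def cf_def by simp
  have GVs: "nabla gm (cf u) (cf v) x = nabla gm (cf v) (cf u) x"
  proof -
    have "(\<Sum>i\<in>UNIV. \<Sum>j\<in>UNIV. christoffel gm x k i j * u $ i * v $ j)
        = (\<Sum>i\<in>UNIV. \<Sum>j\<in>UNIV. christoffel gm x k i j * v $ i * u $ j)" for k
    proof -
      have "(\<Sum>i\<in>UNIV. \<Sum>j\<in>UNIV. christoffel gm x k i j * u $ i * v $ j)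
          = (\<Sum>j\<in>UNIV. \<Sum>i\<in>UNIV. christoffel gm x k i j * u $ i * v $ j)" by (rule sum.swap)
      also have "\<dots> = (\<Sum>j\<in>UNIV. \<Sum>i\<in>UNIV. christoffel gm x k j i * v $ j * u $ i)"
        using Gam_sym[OF x] by (simp add: ac_simps)
      finally show ?thesis .
    qed
    then show ?thesis unfolding GV by simp
  qed
  have gs: "ginner gm (\<lambda>y. \<phi> y *v u) (\<lambda>y. \<phi> y *v v) x = ginner gm (\<lambda>y. \<phi> y *v v) (\<lambda>y. \<phi> y *v u) x"
    using gg_sym[OF x] unfolding ginner_def gg_def by simp
  have S1: "nabla gm (cf u) (\<lambda>y. \<phi> y *v v) x = \<phi> x *v nabla gm (cf u) (cf v) x
        - (ginner gm (\<lambda>y. \<phi> y *v u) (\<lambda>y. \<phi> y *v v) x) *\<^sub>R \<xi> x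
          - (\<epsilon> * (\<eta> x \<bullet> v)) *\<^sub>R (\<phi> x *v (\<phi> x *v u))"
    using Sas[OF svf_cf svf_cf x, of u v] unfolding cf_def by (simp add: algebra_simps)
  have S2: "nabla gm (cf v) (\<lambda>y. \<phi> y *v u) x = \<phi> x *v nabla gm (cf v) (cf u) x
        - (ginner gm (\<lambda>y. \<phi> y *v v) (\<lambda>y. \<phi> y *v u) x) *\<^sub>R \<xi> x
          - (\<epsilon> * (\<eta> x \<bullet> u)) *\<^sub>R (\<phi> x *v (\<phi> x *v v))"
    using Sas[OF svf_cf svf_cf x, of v u] unfolding cf_def by (simp add: algebra_simps)
  have "curv gm (cf u) (cf v) \<xi> x = Rc x u v (\<xi> x)"
    using tensorial[OF x C1_cf C1_cf C1xi] unfolding cf_def by simp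
  moreover have "curv gm (cf u) (cf v) \<xi> x = (\<eta> x \<bullet> u) *\<^sub>R v - (\<eta> x \<bullet> v) *\<^sub>R u"
  proof -
    have "curv gm (cf u) (cf v) \<xi> x = \<epsilon> *\<^sub>R (nabla gm (cf u) (\<lambda>z. \<phi> z *v v) x - nabla gm (cf v) (\<lambda>z. \<phi> z *v u) x)"
      unfolding curv_def c1 c3 by (simp add: algebra_simps)
    also have "\<dots> = \<epsilon> *\<^sub>R ((\<epsilon> * (\<eta> x \<bullet> u)) *\<^sub>R (\<phi> x *v (\<phi> x *v v)) - (\<epsilon> * (\<eta> x \<bullet> v)) *\<^sub>R (\<phi> x *v (\<phi> x *v u)))"
      unfolding S1 S2 GVs gs by (simp add: algebra_simps)
    also have "\<dots> = (\<epsilon> * \<epsilon>) *\<^sub>R ((\<eta> x \<bullet> u) *\<^sub>R (\<phi> x *v (\<phi> x *v v)) - (\<eta> x \<bullet> v) *\<^sub>R (\<phi> x *v (\<phi> x *v u)))"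
      by (simp add: algebra_simps)
    also have "\<dots> = (\<eta> x \<bullet> u) *\<^sub>R v - (\<eta> x \<bullet> v) *\<^sub>R u"
      unfolding eps(1) A1[OF x] by (simp add: algebra_simps)
    finally show ?thesis .
  qed
  ultimately show ?thesis by simp
qed

end

locale alg3 =
  fixes G :: "real^3^3" and \<xi> \<eta> :: "real^3" and \<epsilon> :: real
  assumes Gsym: "transpose G = G" and Gdet: "det G \<noteq> 0" and eps: "\<epsilon> * \<epsilon> = 1"
    and etaxi: "\<eta> \<bullet> \<xi> = 1" and gxi: "\<And>p. p \<bullet> (G *v \<xi>) = \<epsilon> * (\<eta> \<bullet> p)"
begin

definition g :: "real^3 \<Rightarrow> real^3 \<Rightarrow> real" where "g p q = p \<bullet> (G *v q)"

lemma g_sym: "g p q = g q p"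
proof -
  have "g p q = (p v* G) \<bullet> q" unfolding g_def by (simp add: dot_lmul_matrix)
  also have "\<dots> = (transpose G *v p) \<bullet> q" by simp
  also have "\<dots> = g q p" unfolding g_def Gsym by (simp add: inner_commute)
  finally show ?thesis .
qed

lemma g_add1: "g (p + q) r = g p r + g q r" and g_add2: "g r (p + q) = g r p + g r q"
  and g_scale1: "g (c *\<^sub>R p) r = c * g p r" and g_scale2: "g r (c *\<^sub>R p) = c * g r p"
  and g_diff1: "g (p - q) r = g p r - g q r" and g_diff2: "g r (p - q) = g r p - g r q"
  and g_zero1: "g 0 r = 0" and g_zero2: "g r 0 = 0"
  unfolding g_def by (simp_all add: inner_add_left inner_diff_left algebra_simps matrix_vector_mult_scaleR)

lemma g_neg1: "g (- p) r = - g p r" and g_neg2: "g r (- p) = - g r p"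
  using g_scale1[of "-1" p r] g_scale2[of r "-1" p] by simp_all

lemmas g_lin = g_add1 g_add2 g_scale1 g_scale2 g_diff1 g_diff2 g_zero1 g_zero2

lemma g_xi: "g p \<xi> = \<epsilon> * (\<eta> \<bullet> p)"
  using gxi unfolding g_def by (simp add: inner_commute)

lemma g_xi': "g \<xi> p = \<epsilon> * (\<eta> \<bullet> p)" using g_xi[of p] g_sym[of \<xi> p] by simp

lemma g_xixi: "g \<xi> \<xi> = \<epsilon>" using g_xi[of \<xi>] etaxi by (simp add: inner_commute)

lemma eps_nz: "\<epsilon> \<noteq> 0" using eps by auto

lemma g_axis: "g (axis a 1) (axis b 1) = G $ a $ b"
proof -
  have "g (axis a 1) (axis b 1) = (G *v axis b 1) $ a" unfolding g_def by (simp add: cart_eq_inner_axis inner_commute)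
  also have "\<dots> = G $ a $ b" by (simp add: matrix_vector_mult_def axis_def if_distrib cong: if_cong)
  finally show ?thesis .
qed

definition \<pi> :: "real^3 \<Rightarrow> real^3" where "\<pi> p = p - (\<eta> \<bullet> p) *\<^sub>R \<xi>"

lemma g_pi_xi: "g (\<pi> p) \<xi> = 0"
  unfolding \<pi>_def g_lin g_xi g_xixi by (simp add: inner_diff_right etaxi)

lemma g_split: "g p q = g (\<pi> p) (\<pi> q) + \<epsilon> * (\<eta> \<bullet> p) * (\<eta> \<bullet> q)"
  unfolding \<pi>_def g_lin g_neg1 g_neg2 g_xi g_xi' g_xixi by (simp add: algebra_simps inner_diff_right etaxi)

lemma pi_add: "\<pi> (p + q) = \<pi> p + \<pi> q" unfolding \<pi>_def by (simp add: inner_add_right algebra_simps)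

lemma det_rank2: "det (\<chi> a b. s * x $ a * x $ b + t * y $ a * y $ b :: real^3^3) = 0"
  unfolding det_3 by (simp add: algebra_simps)

lemma polar: fixes f :: "real^3 \<Rightarrow> real^3"
  assumes add: "\<And>p q. f (p + q) = f p + f q" and z: "\<And>p. g (f p) (f p) = 0"
  shows "g (f p) (f q) = 0"
proof -
  have "g (f (p + q)) (f (p + q)) = g (f p) (f p) + 2 * g (f p) (f q) + g (f q) (f q)"
    unfolding add g_lin using g_sym[of "f q" "f p"] by simp
  then show ?thesis using z by simp
qed

lemma e1_exists: "\<exists>p. g (\<pi> p) (\<pi> p) \<noteq> 0"
proof (rule ccontr)
  assume "\<not> ?thesis"
  then have z: "g (\<pi> p) (\<pi> p) = 0" for p by simp
  have "G $ a $ b = \<epsilon> * (\<eta> $ a) * (\<eta> $ b)" for a b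
    using g_split[of "axis a 1" "axis b 1"] polar[OF pi_add z, of "axis a 1" "axis b 1"]
    unfolding g_axis by (simp add: cart_eq_inner_axis inner_commute)
  then have "G = (\<chi> a b. \<epsilon> * \<eta> $ a * \<eta> $ b + 0 * \<eta> $ a * \<eta> $ b)" by (simp add: vec_eq_iff)
  then have "det G = 0" using det_rank2[of \<epsilon> \<eta> 0 \<eta>] by (simp only:)
  then show False using Gdet by simp
qed


lemma e2_exists:
  assumes g1: "g e1 e1 \<noteq> 0" and e1xi: "g e1 \<xi> = 0"
  shows "\<exists>q. g (\<pi> q - (g (\<pi> q) e1 / g e1 e1) *\<^sub>R e1) (\<pi> q - (g (\<pi> q) e1 / g e1 e1) *\<^sub>R e1) \<noteq> 0"
proof (rule ccontr)
  define \<gamma> where "\<gamma> = g e1 e1"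
  define f where "f q = \<pi> q - (g (\<pi> q) e1 / \<gamma>) *\<^sub>R e1" for q
  assume "\<not> ?thesis"
  then have z: "g (f q) (f q) = 0" for q unfolding f_def \<gamma>_def by simp
  have fadd: "f (p + q) = f p + f q" for p q
    unfolding f_def pi_add g_lin by (simp add: algebra_simps add_divide_distrib)
  have fe1: "g (f q) e1 = 0" for q unfolding f_def g_lin \<gamma>_def using g1 by simp
  have pif: "\<pi> q = f q + (g (\<pi> q) e1 / \<gamma>) *\<^sub>R e1" for q unfolding f_def by simp
  define \<alpha> where "\<alpha> = (\<chi> a. g (\<pi> (axis a 1)) e1 / \<gamma>)"
  have "G $ a $ b = \<gamma> * \<alpha> $ a * \<alpha> $ b + \<epsilon> * \<eta> $ a * \<eta> $ b" for a b
  proof -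
    define cA where "cA = g (\<pi> (axis a 1)) e1 / \<gamma>"
    define cB where "cB = g (\<pi> (axis b 1)) e1 / \<gamma>"
    have hA: "\<pi> (axis a 1) = f (axis a 1) + cA *\<^sub>R e1" unfolding cA_def by (rule pif)
    have hB: "\<pi> (axis b 1) = f (axis b 1) + cB *\<^sub>R e1" unfolding cB_def by (rule pif)
    have "g (\<pi> (axis a 1)) (\<pi> (axis b 1)) = g (f (axis a 1)) (f (axis b 1)) + cB * g (f (axis a 1)) e1
        + cA * g e1 (f (axis b 1)) + cA * cB * \<gamma>"
      unfolding \<gamma>_def by (simp only: hA hB g_lin) (simp add: algebra_simps)
    also have "\<dots> = cA * cB * \<gamma>"
      using polar[OF fadd z, of "axis a 1" "axis b 1"] fe1[of "axis a 1"] fe1[of "axis b 1"] g_sym[of e1 "f (axis b 1)"]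
      by simp
    finally have "g (\<pi> (axis a 1)) (\<pi> (axis b 1)) = \<gamma> * \<alpha> $ a * \<alpha> $ b"
      unfolding \<alpha>_def cA_def cB_def by simp
    then show ?thesis
      using g_split[of "axis a 1" "axis b 1"] unfolding g_axis by (simp add: cart_eq_inner_axis inner_commute)
  qed
  then have "G = (\<chi> a b. \<gamma> * \<alpha> $ a * \<alpha> $ b + \<epsilon> * \<eta> $ a * \<eta> $ b)" by (simp add: vec_eq_iff)
  then have "det G = 0" using det_rank2[of \<gamma> \<alpha> \<epsilon> \<eta>] by (simp only:)
  then show False using Gdet by simp
qed

lemma basis_exists: "\<exists>e1 e2. g e1 e1 \<noteq> 0 \<and> g e2 e2 \<noteq> 0 \<and> g e1 e2 = 0 \<and> g e1 \<xi> = 0 \<and> g e2 \<xi> = 0"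
proof -
  obtain p where p: "g (\<pi> p) (\<pi> p) \<noteq> 0" using e1_exists by blast
  define e1 where "e1 = \<pi> p"
  have g1: "g e1 e1 \<noteq> 0" and e1xi: "g e1 \<xi> = 0" using p g_pi_xi unfolding e1_def by auto
  obtain q where q: "g (\<pi> q - (g (\<pi> q) e1 / g e1 e1) *\<^sub>R e1) (\<pi> q - (g (\<pi> q) e1 / g e1 e1) *\<^sub>R e1) \<noteq> 0"
    using e2_exists[OF g1 e1xi] by blast
  define e2 where "e2 = \<pi> q - (g (\<pi> q) e1 / g e1 e1) *\<^sub>R e1"
  have "g e1 e2 = 0" unfolding e2_def g_lin using g1 g_sym[of e1 "\<pi> q"] by simp
  moreover have "g e2 \<xi> = 0" unfolding e2_def g_lin using g_pi_xi e1xi by simp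
  ultimately show ?thesis using g1 e1xi q unfolding e2_def[symmetric] by blast
qed

lemma gram: fixes M :: "real^3^3" shows "M ** G ** transpose M = (\<chi> a b. g (M $ a) (M $ b))"
  unfolding g_def by (simp add: vec_eq_iff matrix_matrix_mult_def transpose_def inner_vec_def
      matrix_vector_mult_def sum_3 algebra_simps)

lemma decomp:
  assumes g1: "g e1 e1 \<noteq> 0" and g2: "g e2 e2 \<noteq> 0" and o12: "g e1 e2 = 0" and o1: "g e1 \<xi> = 0" and o2: "g e2 \<xi> = 0"
  shows "y = (g y e1 / g e1 e1) *\<^sub>R e1 + (g y e2 / g e2 e2) *\<^sub>R e2 + (g y \<xi> / \<epsilon>) *\<^sub>R \<xi>"
proof -
  define r where "r = y - ((g y e1 / g e1 e1) *\<^sub>R e1 + (g y e2 / g e2 e2) *\<^sub>R e2 + (g y \<xi> / \<epsilon>) *\<^sub>R \<xi>)"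
  have o21: "g e2 e1 = 0" and o1': "g \<xi> e1 = 0" and o2': "g \<xi> e2 = 0"
    using o12 o1 o2 g_sym by metis+
  have r1: "g e1 r = 0" and r2: "g e2 r = 0" and r3: "g \<xi> r = 0"
    unfolding r_def g_lin using g1 g2 o12 o1 o2 o21 o1' o2' g_xixi eps_nz g_sym[of _ y] by simp_all
  define M :: "real^3^3" where "M = vector [e1, e2, \<xi>]"
  have Mr: "(M ** G) *v r = 0"
  proof -
    have "M *v (G *v r) = 0"
      unfolding vec_eq_iff forall_3 M_def using r1 r2 r3
      by (simp add: matrix_vector_mult_def g_def inner_vec_def)
    then show ?thesis by (simp add: matrix_vector_mul_assoc)
  qed
  have "det (M ** G ** transpose M) = g e1 e1 * g e2 e2 * \<epsilon>"
    unfolding gram det_3 M_def using o12 o1 o2 o21 o1' o2' g_xixi by simp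
  then have "det M * det G * det M \<noteq> 0" using g1 g2 eps_nz by (simp add: det_mul det_transpose)
  then have dMG: "det (M ** G) \<noteq> 0" by (simp add: det_mul)
  have "r = (matrix_inv (M ** G) ** (M ** G)) *v r" using matrix_inv_props(2)[OF dMG] by simp
  also have "\<dots> = matrix_inv (M ** G) *v ((M ** G) *v r)" by (simp only: matrix_vector_mul_assoc)
  also have "\<dots> = 0" by (simp only: Mr matrix_vector_mult_0_right)
  finally have "r = 0" .
  then show ?thesis unfolding r_def by simp
qed


lemma pairsym:
  fixes T :: "real^3 \<Rightarrow> real^3 \<Rightarrow> real^3 \<Rightarrow> real^3"
  assumes anti: "\<And>u v w. T u v w = - T v u w"
    and P2: "\<And>u v w z. g (T u v w) z = - g (T u v z) w"
    and Bi: "\<And>u v w. T u v w + T v w u + T w u v = 0"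
  shows "g (T u v w) z = g (T w z u) v"
proof -
  have anti1: "g (T a b c) d = - g (T b a c) d" for a b c d using anti[of a b c] by (simp add: g_neg1)
  have anti2: "g (T a b c) d = - g (T a b d) c" for a b c d by (rule P2)
  have B: "g (T a b c) d + g (T b c a) d + g (T c a b) d = 0" for a b c d
    using arg_cong[OF Bi[of a b c], of "\<lambda>y. g y d"] by (simp add: g_add1 g_zero1)
  show ?thesis using anti1[of u v w z] anti2[of u v w z] anti1[of v w u z] anti2[of v w u z] anti1[of w u v z] anti2[of w u v z] anti1[of v w z u] anti2[of v w z u] anti1[of w z v u] anti2[of w z v u] anti1[of z v w u] anti2[of z v w u] anti1[of w z u v] anti2[of w z u v] anti1[of z u w v] anti2[of z u w v] anti1[of u w z v] anti2[of u w z v] anti1[of z u v w] anti2[of z u v w] anti1[of u v z w] anti2[of u v z w] anti1[of v z u w] anti2[of v z u w] B[of u v w z] B[of v w z u] B[of w z u v] B[of z u v w] by linarith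
qed

lemma vanish:
  fixes T :: "real^3 \<Rightarrow> real^3 \<Rightarrow> real^3 \<Rightarrow> real^3"
  assumes g1: "g e1 e1 \<noteq> 0" and g2: "g e2 e2 \<noteq> 0" and o12: "g e1 e2 = 0" and o1: "g e1 \<xi> = 0" and o2: "g e2 \<xi> = 0"
    and l1a: "\<And>p q v w. T (p + q) v w = T p v w + T q v w" and l1s: "\<And>c p v w. T (c *\<^sub>R p) v w = c *\<^sub>R T p v w"
    and l2a: "\<And>p q u w. T u (p + q) w = T u p w + T u q w" and l2s: "\<And>c p u w. T u (c *\<^sub>R p) w = c *\<^sub>R T u p w"
    and l3a: "\<And>p q u v. T u v (p + q) = T u v p + T u v q" and l3s: "\<And>c p u v. T u v (c *\<^sub>R p) = c *\<^sub>R T u v p"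
    and anti: "\<And>u v w. T u v w = - T v u w"
    and P2: "\<And>u v w z. g (T u v w) z = - g (T u v z) w"
    and Bi: "\<And>u v w. T u v w + T v w u + T w u v = 0"
    and Txi: "\<And>u v. T u v \<xi> = 0"
    and T12: "g (T e1 e2 e2) e1 = 0"
  shows "T u v w = 0"
proof -
  have dec: "\<exists>a1 a2 a3. y = a1 *\<^sub>R e1 + a2 *\<^sub>R e2 + a3 *\<^sub>R \<xi>" for y
    using decomp[OF g1 g2 o12 o1 o2, of y] by blast
  have nd: "y = 0" if "g y e1 = 0" "g y e2 = 0" "g y \<xi> = 0" for y
    using decomp[OF g1 g2 o12 o1 o2, of y] that by simp
  have self: "g (T a b c) c = 0" for a b c using P2[of a b c c] by simp
  have Tx1: "T \<xi> b c = 0" for b c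
  proof -
    have "g (T \<xi> b c) z = 0" for z using pairsym[OF anti P2 Bi, of \<xi> b c z] Txi[of c z] by (simp add: g_zero1)
    then show ?thesis using nd by blast
  qed
  have Tx2: "T a \<xi> c = 0" for a c using anti[of a \<xi> c] Tx1 by simp
  have T11: "T a a c = 0" for a c
  proof -
    have e: "T a a c = - T a a c" by (rule anti)
    have "(2::real) *\<^sub>R T a a c = T a a c + - T a a c" unfolding scaleR_2 by (subst (2) e) simp
    then show ?thesis by simp
  qed
  have o21: "g e2 e1 = 0" using o12 g_sym by metis
  have T121: "T e1 e2 e1 = 0"
    by (rule nd) (use self[of e1 e2 e1] P2[of e1 e2 e1 e2] T12 P2[of e1 e2 e1 \<xi>] Txi[of e1 e2] in \<open>auto simp: g_zero1\<close>)
  have T122: "T e1 e2 e2 = 0"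
    by (rule nd) (use self[of e1 e2 e2] T12 P2[of e1 e2 e2 \<xi>] Txi[of e1 e2] in \<open>auto simp: g_zero1\<close>)
  have T12w: "T e1 e2 c = 0" for c
  proof -
    obtain a1 a2 a3 where c: "c = a1 *\<^sub>R e1 + a2 *\<^sub>R e2 + a3 *\<^sub>R \<xi>" using dec by blast
    show ?thesis unfolding c l3a l3s T121 T122 Txi by simp
  qed
  have T21w: "T e2 e1 c = 0" for c using anti[of e2 e1 c] T12w by simp
  have Tbw: "T a b c = 0" if "a \<in> {e1, e2, \<xi>}" "b \<in> {e1, e2, \<xi>}" for a b c
    using that T12w T21w T11 Tx1 Tx2 by auto
  obtain a1 a2 a3 where u: "u = a1 *\<^sub>R e1 + a2 *\<^sub>R e2 + a3 *\<^sub>R \<xi>" using dec by blast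
  obtain b1 b2 b3 where v: "v = b1 *\<^sub>R e1 + b2 *\<^sub>R e2 + b3 *\<^sub>R \<xi>" using dec by blast
  show ?thesis unfolding u v l1a l1s l2a l2s using Tbw by simp
qed


definition F :: "real \<Rightarrow> real^3 \<Rightarrow> real^3 \<Rightarrow> real^3 \<Rightarrow> real^3" where
  "F a u v w = a *\<^sub>R (g v w *\<^sub>R u - g u w *\<^sub>R v) - (\<epsilon> + a) *\<^sub>R ((g v w * (\<eta> \<bullet> u) - g u w * (\<eta> \<bullet> v)) *\<^sub>R \<xi>)
     + (1 + \<epsilon> * a) *\<^sub>R ((\<eta> \<bullet> w) *\<^sub>R ((\<eta> \<bullet> u) *\<^sub>R v - (\<eta> \<bullet> v) *\<^sub>R u))"

lemma eps2: "\<epsilon> * (\<epsilon> * x) = x" using eps by (simp add: mult.assoc[symmetric])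

lemma F_l1a: "F a (p + q) v w = F a p v w + F a q v w"
  and F_l1s: "F a (c *\<^sub>R p) v w = c *\<^sub>R F a p v w"
  and F_l2a: "F a u (p + q) w = F a u p w + F a u q w"
  and F_l2s: "F a u (c *\<^sub>R p) w = c *\<^sub>R F a u p w"
  and F_l3a: "F a u v (p + q) = F a u v p + F a u v q"
  and F_l3s: "F a u v (c *\<^sub>R p) = c *\<^sub>R F a u v p"
  unfolding F_def g_lin by (simp_all add: algebra_simps inner_add_right)

lemma F_anti: "F a u v w = - F a v u w"
  unfolding F_def by (simp add: algebra_simps)

lemma F_P2: "g (F a u v w) z = - g (F a u v z) w"
  unfolding F_def g_lin g_xi' by (simp add: algebra_simps eps2)

lemma F_Bi: "F a u v w + F a v w u + F a w u v = 0"
  unfolding F_def using g_sym[of w u] g_sym[of u v] g_sym[of v w] by (simp add: algebra_simps)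

lemma F_xi: "F a u v \<xi> = (\<eta> \<bullet> u) *\<^sub>R v - (\<eta> \<bullet> v) *\<^sub>R u"
  using etaxi unfolding F_def g_xi by (simp add: algebra_simps inner_commute[of \<xi> \<eta>] eps2)

lemma curv_formula:
  fixes R :: "real^3 \<Rightarrow> real^3 \<Rightarrow> real^3 \<Rightarrow> real^3"
  assumes l1a: "\<And>p q v w. R (p + q) v w = R p v w + R q v w" and l1s: "\<And>c p v w. R (c *\<^sub>R p) v w = c *\<^sub>R R p v w"
    and l2a: "\<And>p q u w. R u (p + q) w = R u p w + R u q w" and l2s: "\<And>c p u w. R u (c *\<^sub>R p) w = c *\<^sub>R R u p w"
    and l3a: "\<And>p q u v. R u v (p + q) = R u v p + R u v q" and l3s: "\<And>c p u v. R u v (c *\<^sub>R p) = c *\<^sub>R R u v p"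
    and anti: "\<And>u v w. R u v w = - R v u w"
    and P2: "\<And>u v w z. g (R u v w) z = - g (R u v z) w"
    and Bi: "\<And>u v w. R u v w + R v w u + R w u v = 0"
    and P4: "\<And>u v. R u v \<xi> = (\<eta> \<bullet> u) *\<^sub>R v - (\<eta> \<bullet> v) *\<^sub>R u"
  shows "\<exists>a. \<forall>u v w. R u v w = F a u v w"
proof -
  obtain e1 e2 where g1: "g e1 e1 \<noteq> 0" and g2: "g e2 e2 \<noteq> 0" and o12: "g e1 e2 = 0"
    and o1: "g e1 \<xi> = 0" and o2: "g e2 \<xi> = 0" using basis_exists by blast
  have n1: "\<eta> \<bullet> e1 = 0" and n2: "\<eta> \<bullet> e2 = 0" using o1 o2 eps_nz unfolding g_xi by auto
  define a where "a = g (R e1 e2 e2) e1 / (g e1 e1 * g e2 e2)"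
  define T where "T u v w = R u v w - F a u v w" for u v w
  have Fe: "g (F a e1 e2 e2) e1 = a * (g e1 e1 * g e2 e2)"
    unfolding F_def g_lin g_xi' using n1 n2 o12 g_sym[of e1 e2] by (simp add: algebra_simps)
  have T12: "g (T e1 e2 e2) e1 = 0" unfolding T_def g_diff1 Fe using g1 g2 by (simp add: a_def)
  have t1: "T (p + q) v w = T p v w + T q v w" for p q v w unfolding T_def l1a F_l1a by simp
  have t2: "T (c *\<^sub>R p) v w = c *\<^sub>R T p v w" for c p v w unfolding T_def l1s F_l1s by (simp add: algebra_simps)
  have t3: "T u (p + q) w = T u p w + T u q w" for p q u w unfolding T_def l2a F_l2a by simp
  have t4: "T u (c *\<^sub>R p) w = c *\<^sub>R T u p w" for c p u w unfolding T_def l2s F_l2s by (simp add: algebra_simps)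
  have t5: "T u v (p + q) = T u v p + T u v q" for p q u v unfolding T_def l3a F_l3a by simp
  have t6: "T u v (c *\<^sub>R p) = c *\<^sub>R T u v p" for c p u v unfolding T_def l3s F_l3s by (simp add: algebra_simps)
  have t7: "T u v w = - T v u w" for u v w unfolding T_def using anti[of u v w] F_anti[of a u v w] by simp
  have t8: "g (T u v w) z = - g (T u v z) w" for u v w z unfolding T_def g_lin using P2[of u v w z] F_P2[of a u v w z] by simp
  have t9: "T u v w + T v w u + T w u v = 0" for u v w
  proof -
    have "T u v w + T v w u + T w u v = (R u v w + R v w u + R w u v) - (F a u v w + F a v w u + F a w u v)"
      unfolding T_def by (simp add: algebra_simps)
    then show ?thesis using Bi[of u v w] F_Bi[of a u v w] by simp
  qed
  have t10: "T u v \<xi> = 0" for u v unfolding T_def P4 F_xi by simp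
  have "T u v w = 0" for u v w by (rule vanish[OF g1 g2 o12 o1 o2 t1 t2 t3 t4 t5 t6 t7 t8 t9 t10 T12])
  then show ?thesis unfolding T_def by auto
qed


lemma RicF: "(\<Sum>i\<in>UNIV. F a (axis i 1) v w $ i) = (a - \<epsilon>) * g v w - (1 + \<epsilon> * a) * (\<eta> \<bullet> v) * (\<eta> \<bullet> w)"
proof -
  have "(\<Sum>i\<in>UNIV. F a (axis i 1) v w $ i) = 3 * a * g v w - a * g v w
      - (\<epsilon> + a) * (g v w * (\<eta> \<bullet> \<xi>) - g \<xi> w * (\<eta> \<bullet> v)) + (1 + \<epsilon> * a) * (\<eta> \<bullet> w) * ((\<eta> \<bullet> v) - 3 * (\<eta> \<bullet> v))"
    unfolding F_def g_def by (simp add: sum_3 inner_vec_def matrix_vector_mult_def axis_def algebra_simps)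
  also have "\<dots> = (a - \<epsilon>) * g v w - (1 + \<epsilon> * a) * (\<eta> \<bullet> v) * (\<eta> \<bullet> w)"
    unfolding g_xi' etaxi by (simp add: algebra_simps eps2)
  finally show ?thesis .
qed

lemma Gxi: "G *v \<xi> = \<epsilon> *\<^sub>R \<eta>"
proof -
  have "axis k 1 \<bullet> (G *v \<xi>) = axis k 1 \<bullet> (\<epsilon> *\<^sub>R \<eta>)" for k using gxi[of "axis k 1"] by (simp add: inner_commute)
  then show ?thesis by (simp add: vec_eq_iff cart_eq_inner_axis inner_commute)
qed

lemma Ginv_eta: "matrix_inv G *v \<eta> = \<epsilon> *\<^sub>R \<xi>"
proof -
  have "\<xi> = (matrix_inv G ** G) *v \<xi>" using matrix_inv_props(2)[OF Gdet] by simp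
  also have "\<dots> = \<epsilon> *\<^sub>R (matrix_inv G *v \<eta>)" by (simp add: matrix_vector_mul_assoc[symmetric] Gxi matrix_vector_mult_scaleR)
  finally have "\<epsilon> *\<^sub>R \<xi> = \<epsilon> *\<^sub>R (\<epsilon> *\<^sub>R (matrix_inv G *v \<eta>))" by simp
  then show ?thesis using eps by simp
qed

definition Ric :: "real \<Rightarrow> real^3^3" where
  "Ric a = (\<chi> i j. (a - \<epsilon>) * G $ i $ j - (1 + \<epsilon> * a) * \<eta> $ i * \<eta> $ j)"

lemma Ric_eq: "Ric a = (a - \<epsilon>) *\<^sub>R G - (1 + \<epsilon> * a) *\<^sub>R (\<chi> i j. \<eta> $ i * \<eta> $ j)"
  unfolding Ric_def by (simp add: vec_eq_iff)

lemma outer_mv: "(\<chi> i j. \<eta> $ i * \<eta> $ j :: real^3^3) *v v = (\<eta> \<bullet> v) *\<^sub>R \<eta>"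
  by (simp add: vec_eq_iff matrix_vector_mult_def inner_vec_def sum_distrib_left algebra_simps)

lemma smv: "((c::real) *\<^sub>R (A::real^3^3)) *v v = c *\<^sub>R (A *v v)"
  by (simp add: vec_eq_iff matrix_vector_mult_def sum_distrib_left algebra_simps)

lemma mm_diff_right: "(A::real^3^3) ** (B - C) = A ** B - A ** C"
  by (simp add: vec_eq_iff matrix_matrix_mult_def sum_subtractf algebra_simps)

lemma Q_eq: "(matrix_inv G ** Ric a) *v v = (a - \<epsilon>) *\<^sub>R v - ((\<epsilon> + a) * (\<eta> \<bullet> v)) *\<^sub>R \<xi>"
proof -
  have "(matrix_inv G ** Ric a) *v v = matrix_inv G *v (Ric a *v v)" by (simp add: matrix_vector_mul_assoc)
  also have "Ric a *v v = (a - \<epsilon>) *\<^sub>R (G *v v) - ((1 + \<epsilon> * a) * (\<eta> \<bullet> v)) *\<^sub>R \<eta>"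
    unfolding Ric_eq by (simp add: matrix_vector_mult_diff_rdistrib smv outer_mv)
  also have "matrix_inv G *v \<dots> = (a - \<epsilon>) *\<^sub>R ((matrix_inv G ** G) *v v) - ((1 + \<epsilon> * a) * (\<eta> \<bullet> v)) *\<^sub>R (\<epsilon> *\<^sub>R \<xi>)"
    by (simp add: matrix_vector_mult_diff_distrib matrix_vector_mult_scaleR matrix_vector_mul_assoc Ginv_eta)
  also have "\<dots> = (a - \<epsilon>) *\<^sub>R v - ((\<epsilon> + a) * (\<eta> \<bullet> v)) *\<^sub>R \<xi>"
    using matrix_inv_props(2)[OF Gdet] by (simp add: algebra_simps eps2)
  finally show ?thesis .
qed

lemma scal_eq: "trace (matrix_inv G ** Ric a) = 2 * a - 4 * \<epsilon>"
proof -
  have "trace (matrix_inv G ** Ric a) = (\<Sum>i\<in>UNIV. ((matrix_inv G ** Ric a) *v axis i 1) $ i)"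
    unfolding trace_def by (simp add: matrix_vector_mult_def axis_def if_distrib cong: if_cong)
  also have "\<dots> = (\<Sum>i\<in>UNIV. (a - \<epsilon>) * axis i 1 $ i - (\<epsilon> + a) * (\<eta> $ i) * (\<xi> $ i))"
    unfolding Q_eq by (simp add: cart_eq_inner_axis[of \<eta>] inner_commute)
  also have "\<dots> = 3 * (a - \<epsilon>) - (\<epsilon> + a) * (\<eta> \<bullet> \<xi>)"
    by (simp add: sum_3 inner_vec_def axis_def algebra_simps)
  also have "\<dots> = 2 * a - 4 * \<epsilon>" using etaxi by simp
  finally show ?thesis .
qed

end

lemma final_alg:
  fixes k e gYZ gXZ gXY nX nY nZ :: real and a :: "nat \<Rightarrow> real" and X Y Z xi :: "real^3"
  assumes e2: "e * e = 1"
  defines "r \<equiv> 2 * k - 4 * e"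
  shows "a 0 *\<^sub>R (k *\<^sub>R (gYZ *\<^sub>R X - gXZ *\<^sub>R Y) - (e + k) *\<^sub>R ((gYZ * nX - gXZ * nY) *\<^sub>R xi)
          + (1 + e * k) *\<^sub>R (nZ *\<^sub>R (nX *\<^sub>R Y - nY *\<^sub>R X)))
    + (a 1 * ((k - e) * gYZ - (1 + e * k) * nY * nZ)) *\<^sub>R X
    + (a 2 * ((k - e) * gXZ - (1 + e * k) * nX * nZ)) *\<^sub>R Y
    + (a 3 * ((k - e) * gXY - (1 + e * k) * nX * nY)) *\<^sub>R Z
    + (a 4 * gYZ) *\<^sub>R ((k - e) *\<^sub>R X - ((e + k) * nX) *\<^sub>R xi)
    + (a 5 * gXZ) *\<^sub>R ((k - e) *\<^sub>R Y - ((e + k) * nY) *\<^sub>R xi)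
    + (a 6 * gXY) *\<^sub>R ((k - e) *\<^sub>R Z - ((e + k) * nZ) *\<^sub>R xi)
    + (a 7 * r) *\<^sub>R (gYZ *\<^sub>R X - gXZ *\<^sub>R Y)
  =     (((r / 2 + e) * (a 0 + a 1 + a 4) + a 7 * r + e * a 0) * gYZ) *\<^sub>R X
      - (((r / 2 + e) * (a 0 - a 2 - a 5) + a 7 * r + e * a 0) * gXZ) *\<^sub>R Y
      + ((r / 2 + e) * (a 3 + a 6) * gXY) *\<^sub>R Z
      - ((e * r / 2 + 3) * a 3 * nX * nY) *\<^sub>R Z
      - ((e * r / 2 + 3) * (a 0 + a 1) * nY * nZ) *\<^sub>R X
      + ((e * r / 2 + 3) * (a 0 - a 2) * nX * nZ) *\<^sub>R Y
      + ((r / 2 + 3 * e) * (a 0 - a 5) * gXZ * nY) *\<^sub>R xi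
      - ((r / 2 + 3 * e) * a 6 * gXY * nZ) *\<^sub>R xi
      - ((r / 2 + 3 * e) * (a 0 + a 4) * gYZ * nX) *\<^sub>R xi"
proof -
  have "e * r = 2 * (e * k) - 4 * (e * e)" unfolding r_def by (simp add: algebra_simps)
  then have er: "e * r = 2 * (e * k) - 4" using e2 by simp
  have c1: "e * r / 2 + 3 = 1 + e * k" using er by linarith
  have c2: "r / 2 + e = k - e" unfolding r_def by (simp add: diff_divide_distrib)
  have c3: "r / 2 + 3 * e = e + k" unfolding r_def by (simp add: diff_divide_distrib)
  show ?thesis unfolding c1 c2 c3
    by (simp add: algebra_simps)
qed


context met3
begin

lemma Rc_add1: "Rc x (p + q) v w = Rc x p v w + Rc x q v w"
  and Rc_add2: "Rc x u (p + q) w = Rc x u p w + Rc x u q w"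
  and Rc_add3: "Rc x u v (p + q) = Rc x u v p + Rc x u v q"
  and Rc_sc1: "Rc x (c *\<^sub>R p) v w = c *\<^sub>R Rc x p v w"
  and Rc_sc2: "Rc x u (c *\<^sub>R p) w = c *\<^sub>R Rc x u p w"
  and Rc_sc3: "Rc x u v (c *\<^sub>R p) = c *\<^sub>R Rc x u v p"
  by (simp_all add: vec_eq_iff Rc_comp algebra_simps sum.distrib sum_distrib_left)

end

theorem mainTheorem4:
  fixes U :: "(real^3) set" and \<phi> :: "real^3 \<Rightarrow> real^3^3" and \<xi> :: "real^3 \<Rightarrow> real^3"
    and \<eta> :: "real^3 \<Rightarrow> real^3" and gm :: "real^3 \<Rightarrow> real^3^3" and \<epsilon> :: real
    and a :: "nat \<Rightarrow> real"
  assumes "eps_para_sasakian U \<phi> \<xi> \<eta> gm \<epsilon>"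
  shows "\<forall>X Y Z. smooth_vf U X \<longrightarrow> smooth_vf U Y \<longrightarrow> smooth_vf U Z \<longrightarrow> (\<forall>x\<in>U.
    Tcurv gm a X Y Z x =
        (((scal gm x / 2 + \<epsilon>) * (a 0 + a 1 + a 4) + a 7 * scal gm x + \<epsilon> * a 0) * ginner gm Y Z x) *\<^sub>R X x
      - (((scal gm x / 2 + \<epsilon>) * (a 0 - a 2 - a 5) + a 7 * scal gm x + \<epsilon> * a 0) * ginner gm X Z x) *\<^sub>R Y x
      + ((scal gm x / 2 + \<epsilon>) * (a 3 + a 6) * ginner gm X Y x) *\<^sub>R Z x
      - ((\<epsilon> * scal gm x / 2 + 3) * a 3 * (\<eta> x \<bullet> X x) * (\<eta> x \<bullet> Y x)) *\<^sub>R Z x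
      - ((\<epsilon> * scal gm x / 2 + 3) * (a 0 + a 1) * (\<eta> x \<bullet> Y x) * (\<eta> x \<bullet> Z x)) *\<^sub>R X x
      + ((\<epsilon> * scal gm x / 2 + 3) * (a 0 - a 2) * (\<eta> x \<bullet> X x) * (\<eta> x \<bullet> Z x)) *\<^sub>R Y x
      + ((scal gm x / 2 + 3 * \<epsilon>) * (a 0 - a 5) * ginner gm X Z x * (\<eta> x \<bullet> Y x)) *\<^sub>R \<xi> x
      - ((scal gm x / 2 + 3 * \<epsilon>) * a 6 * ginner gm X Y x * (\<eta> x \<bullet> Z x)) *\<^sub>R \<xi> x
      - ((scal gm x / 2 + 3 * \<epsilon>) * (a 0 + a 4) * ginner gm Y Z x * (\<eta> x \<bullet> X x)) *\<^sub>R \<xi> x)"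
proof (intro allI impI ballI)
  fix X Y Z x
  assume sX: "smooth_vf U X" and sY: "smooth_vf U Y" and sZ: "smooth_vf U Z" and x: "x \<in> U"
  have SAS: "eps_para_sasakian U \<phi> \<xi> \<eta> gm \<epsilon>" by fact
  have AP: "eps_almost_paracontact U \<phi> \<xi> \<eta> gm \<epsilon>" using SAS unfolding eps_para_sasakian_def by blast
  have Uo: "open U" and sg: "smooth3_on U gm" and eps1: "\<epsilon> * \<epsilon> = 1"
    using AP unfolding eps_almost_paracontact_def by auto
  have gsymm: "\<And>y. y \<in> U \<Longrightarrow> transpose (gm y) = gm y" and gdet: "\<And>y. y \<in> U \<Longrightarrow> det (gm y) \<noteq> 0"
    and A2: "\<And>y. y \<in> U \<Longrightarrow> \<eta> y \<bullet> \<xi> y = 1"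
    and A3: "\<And>y. y \<in> U \<Longrightarrow> \<phi> y *v \<xi> y = 0"
    and A5: "\<And>y v w. y \<in> U \<Longrightarrow> (\<phi> y *v v) \<bullet> (gm y *v (\<phi> y *v w)) = v \<bullet> (gm y *v w) - \<epsilon> * (\<eta> y \<bullet> v) * (\<eta> y \<bullet> w)"
    using AP unfolding eps_almost_paracontact_def by auto
  interpret M: met3 U gm
    by unfold_locales (use Uo smooth_C1[OF sg] gsymm gdet in auto)
  have gxi: "p \<bullet> (gm x *v \<xi> x) = \<epsilon> * (\<eta> x \<bullet> p)" for p
    using A5[OF x, of p "\<xi> x"] A3[OF x] A2[OF x] by simp
  interpret A: alg3 "gm x" "\<xi> x" "\<eta> x" \<epsilon>
    by unfold_locales (use gsymm[OF x] gdet[OF x] eps1 A2[OF x] gxi in auto)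
  have gg_eq: "M.gg x p q = A.g p q" for p q unfolding M.gg_def A.g_def ..
  have C1X: "C1 U X" and C1Y: "C1 U Y" and C1Z: "C1 U Z"
    using sX sY sZ smooth_C1 unfolding smooth_vf_def by auto
  obtain k where Rk: "\<And>u v w. M.Rc x u v w = A.F k u v w"
  proof -
    have "\<exists>k. \<forall>u v w. M.Rc x u v w = A.F k u v w"
    proof (rule A.curv_formula)
      show "M.Rc x (p + q) v w = M.Rc x p v w + M.Rc x q v w" for p q v w by (rule M.Rc_add1)
      show "M.Rc x (c *\<^sub>R p) v w = c *\<^sub>R M.Rc x p v w" for c p v w by (rule M.Rc_sc1)
      show "M.Rc x u (p + q) w = M.Rc x u p w + M.Rc x u q w" for p q u w by (rule M.Rc_add2)
      show "M.Rc x u (c *\<^sub>R p) w = c *\<^sub>R M.Rc x u p w" for c p u w by (rule M.Rc_sc2)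
      show "M.Rc x u v (p + q) = M.Rc x u v p + M.Rc x u v q" for p q u v by (rule M.Rc_add3)
      show "M.Rc x u v (c *\<^sub>R p) = c *\<^sub>R M.Rc x u v p" for c p u v by (rule M.Rc_sc3)
      show "M.Rc x u v w = - M.Rc x v u w" for u v w by (rule M.Rc_anti)
      show "A.g (M.Rc x u v w) z = - A.g (M.Rc x u v z) w" for u v w z using M.Rc_P2[OF x, of u v w z] unfolding gg_eq .
      show "M.Rc x u v w + M.Rc x v w u + M.Rc x w u v = 0" for u v w by (rule M.Rc_bianchi[OF x])
      show "M.Rc x u v (\<xi> x) = (\<eta> x \<bullet> u) *\<^sub>R v - (\<eta> x \<bullet> v) *\<^sub>R u" for u v by (rule M.P4[OF SAS x])
    qed
    then show ?thesis using that by blast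
  qed
  have curvF: "curv gm V W Z' x = A.F k (V x) (W x) (Z' x)" if "C1 U V" "C1 U W" "C1 U Z'" for V W Z'
    using M.tensorial[OF x that] Rk by simp
  have ric: "ricci gm V W x = (k - \<epsilon>) * A.g (V x) (W x) - (1 + \<epsilon> * k) * (\<eta> x \<bullet> V x) * (\<eta> x \<bullet> W x)"
    if "C1 U V" "C1 U W" for V W
    unfolding ricci_def using curvF[OF C1_cf that] A.RicF[of k "V x" "W x"] by (simp add: cf_def)
  have rmat: "ricci_mat gm x = A.Ric k"
    unfolding ricci_mat_def A.Ric_def using ric[OF C1_cf C1_cf] A.g_axis
    by (simp add: cf_def vec_eq_iff cart_eq_inner_axis inner_commute)
  have scal: "scal gm x = 2 * k - 4 * \<epsilon>" unfolding scal_def rmat by (rule A.scal_eq)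
  have Qv: "ricci_op gm V x = (k - \<epsilon>) *\<^sub>R V x - ((\<epsilon> + k) * (\<eta> x \<bullet> V x)) *\<^sub>R \<xi> x" for V
    unfolding ricci_op_def rmat by (rule A.Q_eq)
  have gin: "ginner gm V W x = A.g (V x) (W x)" for V W unfolding ginner_def A.g_def ..
  have e2: "\<epsilon> * (\<epsilon> * t) = t" for t using eps1 by (simp add: mult.assoc[symmetric])
  show "Tcurv gm a X Y Z x =
        (((scal gm x / 2 + \<epsilon>) * (a 0 + a 1 + a 4) + a 7 * scal gm x + \<epsilon> * a 0) * ginner gm Y Z x) *\<^sub>R X x
      - (((scal gm x / 2 + \<epsilon>) * (a 0 - a 2 - a 5) + a 7 * scal gm x + \<epsilon> * a 0) * ginner gm X Z x) *\<^sub>R Y x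
      + ((scal gm x / 2 + \<epsilon>) * (a 3 + a 6) * ginner gm X Y x) *\<^sub>R Z x
      - ((\<epsilon> * scal gm x / 2 + 3) * a 3 * (\<eta> x \<bullet> X x) * (\<eta> x \<bullet> Y x)) *\<^sub>R Z x
      - ((\<epsilon> * scal gm x / 2 + 3) * (a 0 + a 1) * (\<eta> x \<bullet> Y x) * (\<eta> x \<bullet> Z x)) *\<^sub>R X x
      + ((\<epsilon> * scal gm x / 2 + 3) * (a 0 - a 2) * (\<eta> x \<bullet> X x) * (\<eta> x \<bullet> Z x)) *\<^sub>R Y x
      + ((scal gm x / 2 + 3 * \<epsilon>) * (a 0 - a 5) * ginner gm X Z x * (\<eta> x \<bullet> Y x)) *\<^sub>R \<xi> x
      - ((scal gm x / 2 + 3 * \<epsilon>) * a 6 * ginner gm X Y x * (\<eta> x \<bullet> Z x)) *\<^sub>R \<xi> x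
      - ((scal gm x / 2 + 3 * \<epsilon>) * (a 0 + a 4) * ginner gm Y Z x * (\<eta> x \<bullet> X x)) *\<^sub>R \<xi> x"
    unfolding Tcurv_def curvF[OF C1X C1Y C1Z] ric[OF C1Y C1Z] ric[OF C1X C1Z] ric[OF C1X C1Y] Qv gin scal A.F_def
    by (rule final_alg[OF eps1])
qed

end
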